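(* For each $n$, let $p=p_n$ and let $\mathbf X_1,\ldots,\mathbf X_n$ be i.i.d. random vectors in $\mathbb R^p$ whose coordinates have continuous marginal distribution functions $F_1,\ldots,F_p$. Assume $p/n\to y\in(0,\infty)$. Then $$L\big(F^{\boldsymbol\rho_n},F^{\mathbf W_n}\big)\to 0\quad\text{almost surely}.$$
   Context: $\mathbf X_i=(x_{i1},\ldots,x_{ip})^\top$. Ranks $r_{ij}=1+\sum_{k\ne i}I(x_{kj}\le x_{ij})$; standardized ranking matrix $\mathbf R=\big(\sqrt{12/(n^2-1)}\,(r_{ij}-\tfrac{n+1}{2})\big)_{n\times p}$; Spearman's rank correlation matrix $\boldsymbol\rho_n=\frac1n\mathbf R^\top\mathbf R$. $\mathbf A_i=\mathbb E\{\mathrm{sign}(\mathbf X_i-\mathbf X_k)\mid\mathbf X_i\}=(2F_1(x_{i1})-1,\ldots,2F_p(x_{ip})-1)^\top$ ($k\ne i$), and $\mathbf W_n=\frac3n\sum_{i=1}^n\mathbf A_i\mathbf A_i^\top$. $F^{\mathbf H}(x)=\frac1p\sum_i I(\lambda_i(\mathbf H)\le x)$ is the empirical spectral distribution and $L$ the Lévy distance. *)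

theory Defs
  imports "HOL-Probability.Probability" "Jordan_Normal_Form.Char_Poly"
begin

(* For the real symmetric matrices used below,
   all eigenvalues are real, so this is (1/p) #{i. lambda_i(H) <= x}. *)
definition esd :: "real mat \<Rightarrow> real \<Rightarrow> real" where
  "esd H x = (\<Sum>e\<in>{e. poly (char_poly H) e = 0 \<and> e \<le> x}.
                 real (order e (char_poly H))) / real (dim_row H)"

definition levy_dist :: "(real \<Rightarrow> real) \<Rightarrow> (real \<Rightarrow> real) \<Rightarrow> real" where
  "levy_dist F G = Inf {\<epsilon>. \<epsilon> > 0 \<and>
      (\<forall>x. F (x - \<epsilon>) - \<epsilon> \<le> G x \<and> G x \<le> F (x + \<epsilon>) + \<epsilon>)}"

(* Data: x i j = j-th coordinate of the i-th observation, i < n, j < p. *)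
definition rank_ij :: "nat \<Rightarrow> (nat \<Rightarrow> nat \<Rightarrow> real) \<Rightarrow> nat \<Rightarrow> nat \<Rightarrow> real" where
  "rank_ij n x i j = 1 + real (card {k. k < n \<and> k \<noteq> i \<and> x k j \<le> x i j})"

definition rank_mat :: "nat \<Rightarrow> nat \<Rightarrow> (nat \<Rightarrow> nat \<Rightarrow> real) \<Rightarrow> real mat" where
  "rank_mat n p x = mat n p (\<lambda>(i, j).
      sqrt (12 / ((real n)\<^sup>2 - 1)) * (rank_ij n x i j - (real n + 1) / 2))"

definition spearman :: "nat \<Rightarrow> nat \<Rightarrow> (nat \<Rightarrow> nat \<Rightarrow> real) \<Rightarrow> real mat" where
  "spearman n p x = (1 / real n) \<cdot>\<^sub>m (transpose_mat (rank_mat n p x) * rank_mat n p x)"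

definition W_mat :: "nat \<Rightarrow> nat \<Rightarrow> (nat \<Rightarrow> real \<Rightarrow> real) \<Rightarrow> (nat \<Rightarrow> nat \<Rightarrow> real) \<Rightarrow> real mat" where
  "W_mat n p F x = mat p p (\<lambda>(j, l).
      (3 / real n) * (\<Sum>i<n. (2 * F j (x i j) - 1) * (2 * F l (x i l) - 1)))"

end

theory Submission
  imports Defs "HOL-Real_Asymp.Real_Asymp"
begin

no_notation Finite_Cartesian_Product.vec_nth (infixl "$" 90)


lemma real_sym_eigenvalue:
  fixes A :: "real mat"
  assumes A: "A \<in> carrier_mat n n" and n: "n > 0"
    and sym: "\<And>i j. i < n \<Longrightarrow> j < n \<Longrightarrow> A $$ (i,j) = A $$ (j,i)"
  shows "\<exists>e. eigenvalue A e"
proof -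
  let ?Ac = "map_mat complex_of_real A"
  have Ac: "?Ac \<in> carrier_mat n n" using A by auto
  have cp: "char_poly ?Ac = map_poly complex_of_real (char_poly A)"
    by (rule of_real_hom.char_poly_hom[OF A])
  have "degree (char_poly ?Ac) = n" using degree_monic_char_poly[OF Ac] by auto
  hence "\<not> constant (poly (char_poly ?Ac))" using n
    by (metis constant_degree not_gr_zero)
  then obtain z where z: "poly (char_poly ?Ac) z = 0"
    using fundamental_theorem_of_algebra by blast
  hence "eigenvalue ?Ac z" using eigenvalue_root_char_poly[OF Ac] by auto
  then obtain w where ew: "eigenvector ?Ac w z" unfolding eigenvalue_def by auto
  hence w: "w \<in> carrier_vec n" and w0: "w \<noteq> 0\<^sub>v n" and eq: "?Ac *\<^sub>v w = z \<cdot>\<^sub>v w"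
    unfolding eigenvector_def using A by auto
  have comp: "(\<Sum>j<n. complex_of_real (A $$ (i,j)) * w $ j) = z * w $ i" if i: "i < n" for i
  proof -
    have "(?Ac *\<^sub>v w) $ i = (z \<cdot>\<^sub>v w) $ i" using eq by simp
    thus ?thesis using i A w
      by (auto simp: mult_mat_vec_def scalar_prod_def lessThan_atLeast0 intro!: sum.cong)
  qed
  define S where "S = (\<Sum>i<n. cnj (w $ i) * (\<Sum>j<n. complex_of_real (A $$ (i,j)) * w $ j))"
  define T where "T = (\<Sum>i<n. cnj (w $ i) * w $ i)"
  have ST: "S = z * T" unfolding S_def T_def using comp
    by (simp add: sum_distrib_left algebra_simps)
  have "cnj S = (\<Sum>i<n. w $ i * (\<Sum>j<n. complex_of_real (A $$ (i,j)) * cnj (w $ j)))"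
    unfolding S_def by (simp add: sum_distrib_left)
  also have "\<dots> = (\<Sum>i<n. \<Sum>j<n. w $ i * complex_of_real (A $$ (i,j)) * cnj (w $ j))"
    by (simp add: sum_distrib_left algebra_simps)
  also have "\<dots> = (\<Sum>j<n. \<Sum>i<n. w $ i * complex_of_real (A $$ (i,j)) * cnj (w $ j))"
    by (rule sum.swap)
  also have "\<dots> = S" unfolding S_def
    by (auto simp: sum_distrib_left algebra_simps sym intro!: sum.cong)
  finally have Sr: "cnj S = S" .
  have Tr: "cnj T = T" unfolding T_def by (simp add: mult.commute)
  have Tnn: "T = complex_of_real (\<Sum>i<n. (cmod (w $ i))\<^sup>2)"
    unfolding T_def of_real_sum of_real_power by (intro sum.cong refl) (simp only: of_real_power[symmetric] complex_norm_square mult.commute)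
  obtain i where i: "i < n" "w $ i \<noteq> 0" using w w0 by (metis eq_vecI index_zero_vec carrier_vecD)
  have "(\<Sum>i<n. (cmod (w $ i))\<^sup>2) > 0"
    by (rule sum_pos2[of _ i]) (use i in auto)
  hence T0: "T \<noteq> 0" unfolding Tnn of_real_eq_0_iff by linarith
  have "cnj z * T = z * T" using Sr Tr ST by (metis complex_cnj_mult)
  hence zr: "cnj z = z" using T0 by simp
  have "z = complex_of_real (Re z)" using zr by (metis Reals_cnj_iff complex_is_Real_iff of_real_Re)
  have "complex_of_real (poly (char_poly A) (Re z)) = poly (map_poly complex_of_real (char_poly A)) (complex_of_real (Re z))"
    by (rule of_real_hom.poly_map_poly[symmetric])
  also have "\<dots> = 0" using z cp \<open>z = complex_of_real (Re z)\<close> by simp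
  finally have "complex_of_real (poly (char_poly A) (Re z)) = 0" .
  hence "poly (char_poly A) (Re z) = 0" by simp
  thus ?thesis using eigenvalue_root_char_poly[OF A] by blast
qed


definition orthn :: "(nat \<Rightarrow> nat \<Rightarrow> real) \<Rightarrow> nat \<Rightarrow> bool" where
  "orthn u n \<longleftrightarrow> (\<forall>k<n. \<forall>l<n. (\<Sum>i<n. u k i * u l i) = (if k = l then 1 else 0))"
definition compn :: "(nat \<Rightarrow> nat \<Rightarrow> real) \<Rightarrow> nat \<Rightarrow> bool" where
  "compn u n \<longleftrightarrow> (\<forall>i<n. \<forall>j<n. (\<Sum>k<n. u k i * u k j) = (if i = j then 1 else 0))"

lemma sum_delta_l: "finite S \<Longrightarrow> r \<in> S \<Longrightarrow> (\<Sum>s\<in>S. (if r = s then 1 else 0) * f s) = (f r :: real)"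
proof -
  assume "finite S" "r \<in> S"
  have "(\<Sum>s\<in>S. (if r = s then 1 else 0) * f s) = (\<Sum>s\<in>S. if r = s then f s else 0)"
    by (intro sum.cong) auto
  thus ?thesis using \<open>finite S\<close> \<open>r \<in> S\<close> by simp
qed
lemma sum_delta_r: "finite S \<Longrightarrow> r \<in> S \<Longrightarrow> (\<Sum>s\<in>S. f s * (if r = s then 1 else 0)) = (f r :: real)"
  using sum_delta_l[of S r f] by (simp add: mult.commute)
lemma sum_delta_l': "finite S \<Longrightarrow> r \<in> S \<Longrightarrow> (\<Sum>s\<in>S. (if s = r then 1 else 0) * f s) = (f r :: real)"
  using sum_delta_l[of S r f] by (simp add: eq_commute)
lemma sum_delta_r': "finite S \<Longrightarrow> r \<in> S \<Longrightarrow> (\<Sum>s\<in>S. f s * (if s = r then 1 else 0)) = (f r :: real)"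
  using sum_delta_r[of S r f] by (simp add: eq_commute)

lemma bilin:
  fixes \<alpha> \<beta> :: "nat \<Rightarrow> real"
  assumes "finite I" "finite R" "finite S"
  shows "(\<Sum>i\<in>I. (\<Sum>r\<in>R. \<alpha> r * f r i) * (\<Sum>s\<in>S. \<beta> s * g s i))
       = (\<Sum>r\<in>R. \<Sum>s\<in>S. \<alpha> r * \<beta> s * (\<Sum>i\<in>I. f r i * g s i))"
proof -
  have "(\<Sum>i\<in>I. (\<Sum>r\<in>R. \<alpha> r * f r i) * (\<Sum>s\<in>S. \<beta> s * g s i))
      = (\<Sum>i\<in>I. \<Sum>r\<in>R. \<Sum>s\<in>S. \<alpha> r * \<beta> s * (f r i * g s i))"
    by (simp add: sum_product algebra_simps)
  also have "\<dots> = (\<Sum>r\<in>R. \<Sum>i\<in>I. \<Sum>s\<in>S. \<alpha> r * \<beta> s * (f r i * g s i))"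
    by (rule sum.swap)
  also have "\<dots> = (\<Sum>r\<in>R. \<Sum>s\<in>S. \<Sum>i\<in>I. \<alpha> r * \<beta> s * (f r i * g s i))"
    by (intro sum.cong refl sum.swap)
  also have "\<dots> = (\<Sum>r\<in>R. \<Sum>s\<in>S. \<alpha> r * \<beta> s * (\<Sum>i\<in>I. f r i * g s i))"
    by (simp add: sum_distrib_left)
  finally show ?thesis .
qed

lemma householder:
  assumes n: "n > 0" and v: "(\<Sum>i<n. (v i)\<^sup>2) = 1"
  shows "\<exists>q. orthn q n \<and> compn q n \<and> (\<forall>i<n. q 0 i = v i)"
proof (cases "v 0 = 1")
  case True
  have "(\<Sum>i<n. (v i)\<^sup>2) = (v 0)\<^sup>2 + (\<Sum>i\<in>{1..<n}. (v i)\<^sup>2)"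
    using n by (metis Suc_le_eq atLeast0LessThan sum.atLeast_Suc_lessThan One_nat_def)
  hence z: "(\<Sum>i\<in>{1..<n}. (v i)\<^sup>2) = 0" using True v by simp
  have vz: "v i = 0" if "1 \<le> i" "i < n" for i
    using sum_nonneg_eq_0_iff[of "{1..<n}" "\<lambda>i. (v i)\<^sup>2"] z that by auto
  let ?q = "\<lambda>k i. if k = i then 1 else 0 :: real"
  have "orthn ?q n" unfolding orthn_def using sum_delta_l[of "{..<n}"] by auto
  moreover have "compn ?q n" unfolding compn_def using sum_delta_l'[of "{..<n}"] by auto
  moreover have "\<forall>i<n. ?q 0 i = v i" using vz True by (auto simp: not_less)
  ultimately show ?thesis by blast
next
  case False
  define w where "w i = v i - (if i = 0 then 1 else 0)" for i
  define c where "c = (\<Sum>i<n. (w i)\<^sup>2)"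
  have "c = (\<Sum>i<n. (v i)\<^sup>2) - 2 * (\<Sum>i<n. (if i = 0 then v i else 0)) + (\<Sum>i<n. (if i = 0 then 1 else 0))"
  proof -
    have "c = (\<Sum>i<n. (v i)\<^sup>2 - 2*(if i=0 then v i else 0) + (if i = 0 then 1 else 0))"
      unfolding c_def w_def by (intro sum.cong refl) (auto simp: power2_eq_square algebra_simps)
    thus ?thesis by (simp add: sum.distrib sum_subtractf sum_distrib_left[symmetric])
  qed
  hence c: "c = - 2 * w 0" using v n unfolding w_def by simp
  have c0: "c \<noteq> 0" using c False unfolding w_def by simp
  define t where "t = 2 / c"
  define q where "q k i = (if k = i then 1 else 0) - t * w k * w i" for k i
  have gen: "(\<Sum>i<n. q k i * q l i) = (if k = l then 1 else 0)" if "k < n" "l < n" for k l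
  proof -
    let ?d = "\<lambda>k i. if k = i then 1 else 0 :: real"
    have "(\<Sum>i<n. q k i * q l i) = (\<Sum>i<n. ?d k i * ?d l i - t*w l*(?d k i * w i)
          - t*w k*(?d l i * w i) + t*t*w k*w l*(w i)\<^sup>2)"
      by (intro sum.cong refl) (simp add: q_def algebra_simps power2_eq_square)
    also have "\<dots> = (\<Sum>i<n. ?d k i * ?d l i) - t*w l*(\<Sum>i<n. ?d k i * w i)
          - t*w k*(\<Sum>i<n. ?d l i * w i) + t*t*w k*w l*c"
      by (simp add: sum.distrib sum_subtractf sum_distrib_left c_def)
    also have "\<dots> = (if k = l then 1 else 0) - t * w l * w k - t * w k * w l + t * t * w k * w l * c"
      using that by (simp add: sum_delta_l)
    also have "t * t * c = 2 * t" unfolding t_def using c0 by (simp add: field_simps)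
    hence "t * t * w k * w l * c = 2 * t * w k * w l" by (metis mult.commute mult.left_commute)
    finally show ?thesis by (simp add: algebra_simps)
  qed
  have qs: "q k i = q i k" for k i unfolding q_def by (auto simp: mult.commute)
  have "orthn q n" unfolding orthn_def using gen by auto
  moreover have "compn q n" unfolding compn_def using gen qs by (metis (no_types, lifting) sum.cong)
  moreover have "\<forall>i<n. q 0 i = v i"
  proof (intro allI impI)
    fix i assume "i < n"
    have "q 0 i = (if 0 = i then 1 else 0) - t * w 0 * w i" by (simp add: q_def)
    also have "t * w 0 = -1" using c c0 unfolding t_def by (simp add: field_simps)
    finally show "q 0 i = v i" unfolding w_def by auto
  qed
  ultimately show ?thesis by blast
qed


definition eigb :: "(nat \<Rightarrow> nat \<Rightarrow> real) \<Rightarrow> (nat \<Rightarrow> nat \<Rightarrow> real) \<Rightarrow> (nat \<Rightarrow> real) \<Rightarrow> nat \<Rightarrow> bool" where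
  "eigb A u a n \<longleftrightarrow> (\<forall>k<n. \<forall>i<n. (\<Sum>j<n. A i j * u k j) = a k * u k i)"

lemma eigvec_exists:
  fixes A :: "nat \<Rightarrow> nat \<Rightarrow> real"
  assumes n: "n > 0" and sym: "\<And>i j. i < n \<Longrightarrow> j < n \<Longrightarrow> A i j = A j i"
  shows "\<exists>e v. (\<Sum>i<n. (v i)\<^sup>2) = 1 \<and> (\<forall>i<n. (\<Sum>j<n. A i j * v j) = e * v i)"
proof -
  let ?M = "mat n n (\<lambda>(i,j). A i j)"
  have M: "?M \<in> carrier_mat n n" by auto
  obtain e where "eigenvalue ?M e"
    using real_sym_eigenvalue[OF M n] sym by auto
  then obtain x where "eigenvector ?M x e" unfolding eigenvalue_def by auto
  hence x: "x \<in> carrier_vec n" and x0: "x \<noteq> 0\<^sub>v n" and eq: "?M *\<^sub>v x = e \<cdot>\<^sub>v x"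
    unfolding eigenvector_def by auto
  have ev: "(\<Sum>j<n. A i j * x $ j) = e * x $ i" if "i < n" for i
  proof -
    have "(?M *\<^sub>v x) $ i = (e \<cdot>\<^sub>v x) $ i" using eq by simp
    thus ?thesis using that x
      by (auto simp: mult_mat_vec_def scalar_prod_def lessThan_atLeast0 intro!: sum.cong)
  qed
  obtain i0 where i0: "i0 < n" "x $ i0 \<noteq> 0" using x x0 by (metis eq_vecI index_zero_vec carrier_vecD)
  define s where "s = (\<Sum>i<n. (x $ i)\<^sup>2)"
  have s: "s > 0" unfolding s_def by (rule sum_pos2[of _ i0]) (use i0 in auto)
  define v where "v i = x $ i / sqrt s" for i
  have "(\<Sum>i<n. (v i)\<^sup>2) = (\<Sum>i<n. (x $ i)\<^sup>2) / s"
    unfolding v_def using s by (simp add: power_divide sum_divide_distrib)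
  also have "\<dots> = 1" using s unfolding s_def by simp
  finally have v1: "(\<Sum>i<n. (v i)\<^sup>2) = 1" .
  have "(\<Sum>j<n. A i j * v j) = e * v i" if "i < n" for i
    unfolding v_def using ev[OF that] by (simp add: sum_divide_distrib[symmetric] times_divide_eq_right)
  thus ?thesis using v1 by blast
qed

lemma expand_gen:
  assumes cq: "compn q n" and i: "i < n"
  shows "z i = (\<Sum>t<n. (\<Sum>j<n. q t j * z j) * q t i)"
proof -
  have "(\<Sum>t<n. (\<Sum>j<n. q t j * z j) * q t i) = (\<Sum>t<n. \<Sum>j<n. q t j * z j * q t i)"
    by (simp add: sum_distrib_right)
  also have "\<dots> = (\<Sum>j<n. \<Sum>t<n. q t j * z j * q t i)" by (rule sum.swap)
  also have "\<dots> = (\<Sum>j<n. (\<Sum>t<n. q t j * q t i) * z j)"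
    by (intro sum.cong refl, unfold sum_distrib_right, intro sum.cong refl) (simp add: ac_simps)
  also have "\<dots> = (\<Sum>j<n. (if j = i then 1 else 0) * z j)"
    using i cq unfolding compn_def by (intro sum.cong refl) simp
  also have "\<dots> = z i" using i by (simp add: sum_delta_l')
  finally show ?thesis by simp
qed

lemma spectral_fun:
  fixes A :: "nat \<Rightarrow> nat \<Rightarrow> real"
  assumes "\<And>i j. i < n \<Longrightarrow> j < n \<Longrightarrow> A i j = A j i"
  shows "\<exists>u a. orthn u n \<and> compn u n \<and> eigb A u a n"
  using assms
proof (induction n arbitrary: A)
  case 0
  show ?case unfolding orthn_def compn_def eigb_def by auto
next
  case (Suc m)
  define N where "N = Suc m"
  have sym: "\<And>i j. i < N \<Longrightarrow> j < N \<Longrightarrow> A i j = A j i" using Suc.prems N_def by blast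
  obtain e v where v1: "(\<Sum>i<N. (v i)\<^sup>2) = 1" and ev: "\<And>i. i < N \<Longrightarrow> (\<Sum>j<N. A i j * v j) = e * v i"
    using eigvec_exists[of N A] sym N_def by auto
  obtain q where oq: "orthn q N" and cq: "compn q N" and q0: "\<And>i. i < N \<Longrightarrow> q 0 i = v i"
    using householder[of N v] v1 N_def by auto
  have oq': "(\<Sum>i<N. q k i * q l i) = (if k = l then 1 else 0)" if "k < N" "l < N" for k l
    using oq that unfolding orthn_def by auto
  have cq': "(\<Sum>k<N. q k i * q k j) = (if i = j then 1 else 0)" if "i < N" "j < N" for i j
    using cq that unfolding compn_def by auto
  define A3 where "A3 r s = (\<Sum>i<N. \<Sum>j<N. q (Suc r) i * A i j * q (Suc s) j)" for r s
  have A3sym: "A3 r s = A3 s r" if "r < m" "s < m" for r s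
  proof -
    have "A3 r s = (\<Sum>j<N. \<Sum>i<N. q (Suc r) i * A i j * q (Suc s) j)"
      unfolding A3_def by (rule sum.swap)
    also have "\<dots> = A3 s r" unfolding A3_def
      by (intro sum.cong refl) (simp add: sym mult.commute mult.left_commute)
    finally show ?thesis .
  qed
  obtain y b where oy: "orthn y m" and cy: "compn y m" and ey: "eigb A3 y b m"
    using Suc.IH[of A3] A3sym by blast
  have oy': "(\<Sum>i<m. y k i * y l i) = (if k = l then 1 else 0)" if "k < m" "l < m" for k l
    using oy that unfolding orthn_def by auto
  have cy': "(\<Sum>k<m. y k i * y k j) = (if i = j then 1 else 0)" if "i < m" "j < m" for i j
    using cy that unfolding compn_def by auto
  have ey': "(\<Sum>j<m. A3 i j * y k j) = b k * y k i" if "k < m" "i < m" for k i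
    using ey that unfolding eigb_def by auto
  have expand: "z i = (\<Sum>t<N. (\<Sum>j<N. q t j * z j) * q t i)" if "i < N" for z i
    using expand_gen[OF cq that] .
  have q0A: "(\<Sum>j<N. q 0 j * (\<Sum>l<N. A j l * q (Suc r) l)) = 0" if "r < m" for r
  proof -
    have "(\<Sum>j<N. q 0 j * (\<Sum>l<N. A j l * q (Suc r) l)) = (\<Sum>l<N. (\<Sum>j<N. A l j * q 0 j) * q (Suc r) l)"
    proof -
      have "(\<Sum>j<N. q 0 j * (\<Sum>l<N. A j l * q (Suc r) l)) = (\<Sum>j<N. \<Sum>l<N. q 0 j * (A j l * q (Suc r) l))"
        by (simp add: sum_distrib_left)
      also have "\<dots> = (\<Sum>l<N. \<Sum>j<N. q 0 j * (A j l * q (Suc r) l))" by (rule sum.swap)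
      also have "\<dots> = (\<Sum>l<N. (\<Sum>j<N. A l j * q 0 j) * q (Suc r) l)"
        by (intro sum.cong refl, unfold sum_distrib_right, intro sum.cong refl) (simp add: ac_simps sym)
      finally show ?thesis .
    qed
    also have "\<dots> = (\<Sum>l<N. e * (q 0 l * q (Suc r) l))"
      by (intro sum.cong refl) (simp add: ev q0)
    also have "\<dots> = 0" using oq'[of 0 "Suc r"] that N_def by (simp add: sum_distrib_left[symmetric])
    finally show ?thesis .
  qed
  have Aq: "(\<Sum>j<N. A i j * q (Suc r) j) = (\<Sum>s<m. A3 s r * q (Suc s) i)" if "i < N" "r < m" for i r
  proof -
    have "(\<Sum>j<N. A i j * q (Suc r) j)
        = (\<Sum>t<N. (\<Sum>j<N. q t j * (\<Sum>l<N. A j l * q (Suc r) l)) * q t i)"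
      by (rule expand[OF that(1), of "\<lambda>i. \<Sum>j<N. A i j * q (Suc r) j"])
    also have "\<dots> = (\<Sum>s<m. (\<Sum>j<N. q (Suc s) j * (\<Sum>l<N. A j l * q (Suc r) l)) * q (Suc s) i)"
    proof -
      have "(\<Sum>t<N. (\<Sum>j<N. q t j * (\<Sum>l<N. A j l * q (Suc r) l)) * q t i)
         = (\<Sum>j<N. q 0 j * (\<Sum>l<N. A j l * q (Suc r) l)) * q 0 i
           + (\<Sum>s<m. (\<Sum>j<N. q (Suc s) j * (\<Sum>l<N. A j l * q (Suc r) l)) * q (Suc s) i)"
        using sum.lessThan_Suc_shift[of "\<lambda>t. (\<Sum>j<N. q t j * (\<Sum>l<N. A j l * q (Suc r) l)) * q t i" m]
        by (simp only: N_def[symmetric])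
      thus ?thesis using q0A[OF that(2)] by simp
    qed
    also have "\<dots> = (\<Sum>s<m. A3 s r * q (Suc s) i)"
      unfolding A3_def by (intro sum.cong refl) (simp add: sum_distrib_left mult.assoc)
    finally show ?thesis .
  qed
  define u where "u k i = (if k = 0 then q 0 i else (\<Sum>r<m. y (k - 1) r * q (Suc r) i))" for k i
  define a where "a k = (if k = 0 then e else b (k - 1))" for k
  have uS: "u (Suc k) i = (\<Sum>r<m. y k r * q (Suc r) i)" for k i unfolding u_def by simp
  have u0: "u 0 i = q 0 i" for i unfolding u_def by simp
  have lin0: "(\<Sum>i<N. q 0 i * (\<Sum>r<m. c r * q (Suc r) i)) = 0" for c
  proof -
    have "(\<Sum>i<N. q 0 i * (\<Sum>r<m. c r * q (Suc r) i)) = (\<Sum>i<N. \<Sum>r<m. q 0 i * (c r * q (Suc r) i))"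
      by (simp add: sum_distrib_left)
    also have "\<dots> = (\<Sum>r<m. \<Sum>i<N. q 0 i * (c r * q (Suc r) i))" by (rule sum.swap)
    also have "\<dots> = (\<Sum>r<m. c r * (\<Sum>i<N. q 0 i * q (Suc r) i))"
      by (intro sum.cong refl, unfold sum_distrib_left, intro sum.cong refl) (simp add: ac_simps)
    also have "\<dots> = 0" using oq' N_def by (intro sum.neutral) auto
    finally show ?thesis .
  qed
  have ss: "(\<Sum>i<N. u (Suc k) i * u (Suc l) i) = (if k = l then 1 else 0)" if "k < m" "l < m" for k l
  proof -
    have "(\<Sum>i<N. u (Suc k) i * u (Suc l) i) = (\<Sum>r<m. \<Sum>s<m. y k r * y l s * (\<Sum>i<N. q (Suc r) i * q (Suc s) i))"
      unfolding uS by (rule bilin) auto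
    also have "\<dots> = (\<Sum>r<m. \<Sum>s<m. y k r * y l s * (if r = s then 1 else 0))"
      using oq' N_def by (intro sum.cong refl) auto
    also have "\<dots> = (\<Sum>r<m. y k r * y l r)"
      by (intro sum.cong refl) (simp add: sum_delta_r)
    also have "\<dots> = (if k = l then 1 else 0)" using oy' that by simp
    finally show ?thesis .
  qed
  have "orthn u N" unfolding orthn_def
  proof (intro allI impI)
    fix k l assume k: "k < N" and l: "l < N"
    show "(\<Sum>i<N. u k i * u l i) = (if k = l then 1 else 0)"
    proof (cases k)
      case 0
      show ?thesis
      proof (cases l)
        case 0 thus ?thesis using \<open>k = 0\<close> oq' N_def by (simp add: u0)
      next
        case (Suc l') thus ?thesis using \<open>k = 0\<close> lin0[of "y l'"] by (simp add: u0 uS)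
      qed
    next
      case (Suc k')
      show ?thesis
      proof (cases l)
        case 0 thus ?thesis using Suc lin0[of "y k'"] by (simp add: u0 uS mult.commute)
      next
        case (Suc l') thus ?thesis using \<open>k = Suc k'\<close> ss[of k' l'] k l N_def by simp
      qed
    qed
  qed
  moreover have "compn u N" unfolding compn_def
  proof (intro allI impI)
    fix i j assume i: "i < N" and j: "j < N"
    have split: "(\<Sum>k<N. u k i * u k j) = u 0 i * u 0 j + (\<Sum>k<m. u (Suc k) i * u (Suc k) j)"
      using sum.lessThan_Suc_shift[of "\<lambda>k. u k i * u k j" m] by (simp only: N_def[symmetric])
    have "(\<Sum>k<m. u (Suc k) i * u (Suc k) j) = (\<Sum>k<m. \<Sum>r<m. \<Sum>s<m. y k r * y k s * (q (Suc r) i * q (Suc s) j))"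
      unfolding uS by (simp add: sum_product ac_simps)
    also have "\<dots> = (\<Sum>r<m. \<Sum>k<m. \<Sum>s<m. y k r * y k s * (q (Suc r) i * q (Suc s) j))" by (rule sum.swap)
    also have "\<dots> = (\<Sum>r<m. \<Sum>s<m. \<Sum>k<m. y k r * y k s * (q (Suc r) i * q (Suc s) j))"
      by (intro sum.cong refl sum.swap)
    also have "\<dots> = (\<Sum>r<m. \<Sum>s<m. (\<Sum>k<m. y k r * y k s) * (q (Suc r) i * q (Suc s) j))"
      by (simp add: sum_distrib_right)
    also have "\<dots> = (\<Sum>r<m. \<Sum>s<m. (if r = s then 1 else 0) * (q (Suc r) i * q (Suc s) j))"
      using cy' by (intro sum.cong refl) auto
    also have "\<dots> = (\<Sum>r<m. q (Suc r) i * q (Suc r) j)"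
      by (intro sum.cong refl) (simp add: sum_delta_l)
    finally have "(\<Sum>k<N. u k i * u k j) = q 0 i * q 0 j + (\<Sum>r<m. q (Suc r) i * q (Suc r) j)"
      using split by (simp add: u0)
    also have "\<dots> = (\<Sum>t<N. q t i * q t j)"
      using sum.lessThan_Suc_shift[of "\<lambda>t. q t i * q t j" m] by (simp only: N_def[symmetric])
    also have "\<dots> = (if i = j then 1 else 0)" using cq' i j by simp
    finally show "(\<Sum>k<N. u k i * u k j) = (if i = j then 1 else 0)" .
  qed
  moreover have "eigb A u a N" unfolding eigb_def
  proof (intro allI impI)
    fix k i assume k: "k < N" and i: "i < N"
    show "(\<Sum>j<N. A i j * u k j) = a k * u k i"
    proof (cases k)
      case 0
      have "(\<Sum>j<N. A i j * u k j) = (\<Sum>j<N. A i j * v j)"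
        using 0 q0 by (intro sum.cong refl) (simp add: u0)
      also have "\<dots> = e * v i" using ev i by simp
      finally show ?thesis using 0 q0 i by (simp add: a_def u0)
    next
      case (Suc k')
      hence k': "k' < m" using k N_def by simp
      have "(\<Sum>j<N. A i j * u k j) = (\<Sum>j<N. \<Sum>r<m. A i j * (y k' r * q (Suc r) j))"
        using Suc by (simp add: uS sum_distrib_left)
      also have "\<dots> = (\<Sum>r<m. \<Sum>j<N. A i j * (y k' r * q (Suc r) j))" by (rule sum.swap)
      also have "\<dots> = (\<Sum>r<m. y k' r * (\<Sum>j<N. A i j * q (Suc r) j))"
        by (intro sum.cong refl, unfold sum_distrib_left, intro sum.cong refl) (simp add: ac_simps)
      also have "\<dots> = (\<Sum>r<m. y k' r * (\<Sum>s<m. A3 s r * q (Suc s) i))"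
        using Aq i by (intro sum.cong refl) auto
      also have "\<dots> = (\<Sum>r<m. \<Sum>s<m. y k' r * (A3 s r * q (Suc s) i))"
        by (simp add: sum_distrib_left)
      also have "\<dots> = (\<Sum>s<m. \<Sum>r<m. y k' r * (A3 s r * q (Suc s) i))" by (rule sum.swap)
      also have "\<dots> = (\<Sum>s<m. (\<Sum>r<m. A3 s r * y k' r) * q (Suc s) i)"
        by (intro sum.cong refl, unfold sum_distrib_right, intro sum.cong refl) (simp add: ac_simps)
      also have "\<dots> = (\<Sum>s<m. b k' * y k' s * q (Suc s) i)"
        using ey' k' by (intro sum.cong refl) auto
      also have "\<dots> = b k' * u k i"
        using Suc by (simp add: uS sum_distrib_left ac_simps)
      finally show ?thesis using Suc by (simp add: a_def)
    qed
  qed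
  ultimately show ?case unfolding N_def by blast
qed


lemma order_prod_lin: fixes p :: nat shows "order x (\<Prod>k<p. [:- a k, 1:]) = card {k. k < p \<and> a k = (x::real)}"
proof (induction p)
  case 0 thus ?case by simp
next
  case (Suc p)
  have nz1: "(\<Prod>k<p. [:- a k, 1:]) \<noteq> 0" by (simp add: prod_zero_iff)
  have nz2: "[:- a p, 1:] \<noteq> 0" by simp
  have nz: "(\<Prod>k<p. [:- a k, 1:]) * [:- a p, 1:] \<noteq> 0"
    using nz1 nz2 by (simp only: mult_eq_0_iff de_Morgan_disj) simp
  have "order x (\<Prod>k<Suc p. [:- a k, 1:]) = order x (\<Prod>k<p. [:- a k, 1:]) + order x [:- a p, 1:]"
    unfolding prod.lessThan_Suc by (rule order_mult[OF nz])
  also have "order x [:- a p, 1:] = (if a p = x then 1 else 0)"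
    by (simp add: order_linear')
  finally have o: "order x (\<Prod>k<Suc p. [:- a k, 1:]) = order x (\<Prod>k<p. [:- a k, 1:]) + (if a p = x then 1 else 0)" .
  have "{k. k < Suc p \<and> a k = x} = {k. k < p \<and> a k = x} \<union> (if a p = x then {p} else {})"
    by (auto simp: less_Suc_eq)
  hence "card {k. k < Suc p \<and> a k = x} = card {k. k < p \<and> a k = x} + (if a p = x then 1 else 0)"
    by (auto simp: card_insert_if)
  thus ?case using Suc o by simp
qed

lemma esd_prod:
  assumes cp: "char_poly A = (\<Prod>k<p. [:- a k, 1:])" and dim: "dim_row A = p"
  shows "esd A x = real (card {k. k < p \<and> a k \<le> x}) / real p"
proof -
  let ?P = "\<Prod>k<p. [:- a k, 1:]"
  have poly0: "poly ?P e = 0 \<longleftrightarrow> (\<exists>k<p. a k = e)" for e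
    by (auto simp: poly_prod prod_zero_iff)
  have S: "{e. poly ?P e = 0 \<and> e \<le> x} = a ` {k. k < p \<and> a k \<le> x}"
    using poly0 by auto
  have "(\<Sum>e\<in>{e. poly ?P e = 0 \<and> e \<le> x}. real (order e ?P))
      = real (\<Sum>e\<in>a ` {k. k < p \<and> a k \<le> x}. card {k. k < p \<and> a k = e})"
    unfolding S by (simp add: order_prod_lin)
  also have "(\<Sum>e\<in>a ` {k. k < p \<and> a k \<le> x}. card {k. k < p \<and> a k = e})
      = card (\<Union>e\<in>a ` {k. k < p \<and> a k \<le> x}. {k. k < p \<and> a k = e})"
    by (rule card_UN_disjoint[symmetric]) auto
  also have "(\<Union>e\<in>a ` {k. k < p \<and> a k \<le> x}. {k. k < p \<and> a k = e}) = {k. k < p \<and> a k \<le> x}"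
    by auto
  finally show ?thesis unfolding esd_def cp dim by simp
qed

lemma decomp:
  assumes cu: "compn u p" and eu: "eigb A u a p" and i: "i < p" and j: "j < p"
  shows "A i j = (\<Sum>k<p. a k * u k i * u k j)"
proof -
  have "A i j = (\<Sum>l<p. A i l * (if l = j then 1 else 0))" using j by (simp add: sum_delta_r')
  also have "\<dots> = (\<Sum>l<p. A i l * (\<Sum>k<p. u k l * u k j))"
    using cu unfolding compn_def using j by (intro sum.cong refl) auto
  also have "\<dots> = (\<Sum>l<p. \<Sum>k<p. A i l * u k l * u k j)" by (simp add: sum_distrib_left mult.assoc)
  also have "\<dots> = (\<Sum>k<p. \<Sum>l<p. A i l * u k l * u k j)" by (rule sum.swap)
  also have "\<dots> = (\<Sum>k<p. (\<Sum>l<p. A i l * u k l) * u k j)" by (simp add: sum_distrib_right)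
  also have "\<dots> = (\<Sum>k<p. a k * u k i * u k j)"
    using eu i unfolding eigb_def by (intro sum.cong refl) auto
  finally show ?thesis .
qed

lemma char_poly_spec:
  fixes A :: "real mat"
  assumes A: "A \<in> carrier_mat p p" and ou: "orthn u p" and cu: "compn u p"
    and eu: "eigb (\<lambda>i j. A $$ (i,j)) u a p"
  shows "char_poly A = (\<Prod>k<p. [:- a k, 1:])"
proof -
  define U where "U = mat p p (\<lambda>(i,k). u k i)"
  define Ut where "Ut = mat p p (\<lambda>(k,i). u k i)"
  define D where "D = mat p p (\<lambda>(i,j). if i = j then a i else 0)"
  have U: "U \<in> carrier_mat p p" and Ut: "Ut \<in> carrier_mat p p" and D: "D \<in> carrier_mat p p"
    unfolding U_def Ut_def D_def by auto
  have UUt: "U * Ut = 1\<^sub>m p"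
    by (rule eq_matI) (use cu in \<open>auto simp: U_def Ut_def compn_def scalar_prod_def lessThan_atLeast0\<close>)
  have UtU: "Ut * U = 1\<^sub>m p"
    by (rule eq_matI) (use ou in \<open>auto simp: U_def Ut_def orthn_def scalar_prod_def lessThan_atLeast0\<close>)
  have UD: "(U * D) $$ (i,k) = u k i * a k" if "i < p" "k < p" for i k
  proof -
    have "(U * D) $$ (i,k) = (\<Sum>l<p. u l i * (if l = k then a l else 0))"
      using that by (simp add: U_def D_def scalar_prod_def lessThan_atLeast0)
    also have "\<dots> = u k i * a k" using that
      by (simp add: if_distrib[where f = "\<lambda>x. u _ _ * x"] cong: if_cong)
    finally show ?thesis .
  qed
  have AU: "A = U * D * Ut"
  proof (rule eq_matI)
    fix i j assume i: "i < dim_row (U * D * Ut)" and j: "j < dim_col (U * D * Ut)"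
    hence i: "i < p" and j: "j < p" using U Ut by auto
    have "(U * D * Ut) $$ (i,j) = (\<Sum>k<p. (U * D) $$ (i,k) * u k j)"
      using i j U D by (simp add: Ut_def scalar_prod_def lessThan_atLeast0)
    also have "\<dots> = (\<Sum>k<p. a k * u k i * u k j)"
      using UD i by (intro sum.cong refl) auto
    also have "\<dots> = A $$ (i,j)" using decomp[OF cu eu i j] by simp
    finally show "A $$ (i, j) = (U * D * Ut) $$ (i, j)" by simp
  qed (use A U Ut in auto)
  have "similar_mat A D" unfolding similar_mat_def similar_mat_wit_def
    using A U Ut D UUt UtU AU by (intro exI[of _ U] exI[of _ Ut]) (auto simp: Let_def)
  hence "char_poly A = char_poly D" by (rule char_poly_similar)
  also have "\<dots> = (\<Prod>a \<leftarrow> diag_mat D. [:- a, 1:])"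
    by (rule char_poly_upper_triangular[OF D]) (auto simp: D_def upper_triangular_def)
  also have "diag_mat D = map a [0..<p]" unfolding D_def diag_mat_def by auto
  also have "(\<Prod>a \<leftarrow> map a [0..<p]. [:- a, 1:]) = (\<Prod>k<p. [:- a k, 1:])"
    by (simp add: prod.distinct_set_conv_list[symmetric] lessThan_atLeast0 o_def)
  finally show ?thesis .
qed


lemma lin_dep_exists:
  fixes f :: "'t \<Rightarrow> nat \<Rightarrow> real"
  assumes "finite T" "card T > N"
  shows "\<exists>c. (\<exists>t\<in>T. c t \<noteq> 0) \<and> (\<forall>i<N. (\<Sum>t\<in>T. c t * f t i) = 0)"
  using assms
proof (induction N arbitrary: T f)
  case 0
  hence "T \<noteq> {}" by auto
  thus ?case by (intro exI[of _ "\<lambda>_. 1"]) auto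
next
  case (Suc N)
  show ?case
  proof (cases "\<forall>t\<in>T. f t N = 0")
    case True
    obtain c where c: "\<exists>t\<in>T. c t \<noteq> 0" "\<forall>i<N. (\<Sum>t\<in>T. c t * f t i) = 0"
      using Suc.IH[of T f] Suc.prems by auto
    have "\<forall>i<Suc N. (\<Sum>t\<in>T. c t * f t i) = 0"
      using c(2) True by (auto simp: less_Suc_eq)
    thus ?thesis using c(1) by blast
  next
    case False
    then obtain t0 where t0: "t0 \<in> T" "f t0 N \<noteq> 0" by auto
    define T' where "T' = T - {t0}"
    have fT': "finite T'" using Suc.prems unfolding T'_def by auto
    have cT': "card T' > N" using Suc.prems t0 unfolding T'_def by (simp add: card_Diff_singleton)
    define g where "g t i = f t i - (f t N / f t0 N) * f t0 i" for t i
    obtain c' where c': "\<exists>t\<in>T'. c' t \<noteq> 0" "\<forall>i<N. (\<Sum>t\<in>T'. c' t * g t i) = 0"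
      using Suc.IH[OF fT' cT', of g] by auto
    define s where "s = (\<Sum>t\<in>T'. c' t * f t N)"
    define c where "c t = (if t = t0 then - s / f t0 N else c' t)" for t
    have t0T': "t0 \<notin> T'" unfolding T'_def by auto
    have TT': "T = insert t0 T'" using t0 unfolding T'_def by auto
    have sumc: "(\<Sum>t\<in>T. c t * f t i) = - s / f t0 N * f t0 i + (\<Sum>t\<in>T'. c' t * f t i)" for i
    proof -
      have "(\<Sum>t\<in>T. c t * f t i) = c t0 * f t0 i + (\<Sum>t\<in>T'. c t * f t i)"
        unfolding TT' using fT' t0T' by (simp add: sum.insert)
      also have "(\<Sum>t\<in>T'. c t * f t i) = (\<Sum>t\<in>T'. c' t * f t i)"
        using t0T' unfolding c_def by (intro sum.cong refl) auto
      finally show ?thesis by (simp add: c_def)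
    qed
    have "\<forall>i<Suc N. (\<Sum>t\<in>T. c t * f t i) = 0"
    proof (intro allI impI)
      fix i assume i: "i < Suc N"
      show "(\<Sum>t\<in>T. c t * f t i) = 0"
      proof (cases "i = N")
        case True
        thus ?thesis unfolding sumc using t0(2) by (simp add: s_def)
      next
        case False
        hence iN: "i < N" using i by auto
        have "0 = (\<Sum>t\<in>T'. c' t * g t i)" using c'(2) iN by simp
        also have "\<dots> = (\<Sum>t\<in>T'. c' t * f t i) - s / f t0 N * f t0 i"
          unfolding g_def s_def by (simp add: algebra_simps sum_subtractf sum_distrib_left sum_distrib_right sum_divide_distrib)
        finally show ?thesis unfolding sumc by simp
      qed
    qed
    moreover have "\<exists>t\<in>T. c t \<noteq> 0" using c'(1) t0T' TT' unfolding c_def by force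
    ultimately show ?thesis by blast
  qed
qed

definition gram :: "nat \<Rightarrow> (nat \<Rightarrow> nat \<Rightarrow> real) \<Rightarrow> nat \<Rightarrow> nat \<Rightarrow> real" where
  "gram n b j l = (\<Sum>i<n. b i j * b i l)"

lemma coord:
  assumes ou: "orthn u p" and I: "I \<subseteq> {..<p}" and k: "k < p"
  shows "(\<Sum>j<p. (\<Sum>k'\<in>I. \<beta> k' * u k' j) * u k j) = (if k \<in> I then \<beta> k else 0)"
proof -
  have fI: "finite I" using I finite_subset by blast
  have "(\<Sum>j<p. (\<Sum>k'\<in>I. \<beta> k' * u k' j) * u k j) = (\<Sum>j<p. \<Sum>k'\<in>I. \<beta> k' * (u k' j * u k j))"
    by (simp add: sum_distrib_right mult.assoc)
  also have "\<dots> = (\<Sum>k'\<in>I. \<Sum>j<p. \<beta> k' * (u k' j * u k j))" by (rule sum.swap)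
  also have "\<dots> = (\<Sum>k'\<in>I. \<beta> k' * (if k' = k then 1 else 0))"
    using ou I k unfolding orthn_def by (intro sum.cong refl) (auto simp: sum_distrib_left[symmetric])
  also have "\<dots> = (if k \<in> I then \<beta> k else 0)"
    using fI by (simp add: if_distrib[where f = "\<lambda>x. _ * x"] cong: if_cong)
  finally show ?thesis .
qed

lemma quad_form:
  fixes \<beta> :: "nat \<Rightarrow> real"
  assumes ou: "orthn u p" and eu: "eigb (gram n b) u \<alpha> p" and I: "I \<subseteq> {..<p}"
  defines "v \<equiv> \<lambda>j. \<Sum>k\<in>I. \<beta> k * u k j"
  shows "(\<Sum>i<n. (\<Sum>j<p. b i j * v j)\<^sup>2) = (\<Sum>k\<in>I. \<alpha> k * (\<beta> k)\<^sup>2)"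
    and "(\<Sum>j<p. (v j)\<^sup>2) = (\<Sum>k\<in>I. (\<beta> k)\<^sup>2)"
proof -
  have fI: "finite I" using I finite_subset by blast
  have vu: "(\<Sum>j<p. v j * u k j) = \<beta> k" if "k \<in> I" for k
    using coord[OF ou I, of k \<beta>] that I unfolding v_def by auto
  have Gv: "(\<Sum>l<p. gram n b j l * v l) = (\<Sum>k\<in>I. \<beta> k * \<alpha> k * u k j)" if j: "j < p" for j
  proof -
    have "(\<Sum>l<p. gram n b j l * v l) = (\<Sum>l<p. \<Sum>k\<in>I. \<beta> k * (gram n b j l * u k l))"
      unfolding v_def by (simp add: sum_distrib_left ac_simps)
    also have "\<dots> = (\<Sum>k\<in>I. \<Sum>l<p. \<beta> k * (gram n b j l * u k l))" by (rule sum.swap)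
    also have "\<dots> = (\<Sum>k\<in>I. \<beta> k * \<alpha> k * u k j)"
      using eu I j unfolding eigb_def by (intro sum.cong refl) (auto simp: sum_distrib_left[symmetric])
    finally show ?thesis .
  qed
  have "(\<Sum>i<n. (\<Sum>j<p. b i j * v j)\<^sup>2) = (\<Sum>i<n. \<Sum>j<p. \<Sum>l<p. v j * (b i j * b i l) * v l)"
    by (simp add: power2_eq_square sum_product ac_simps)
  also have "\<dots> = (\<Sum>j<p. \<Sum>i<n. \<Sum>l<p. v j * (b i j * b i l) * v l)" by (rule sum.swap)
  also have "\<dots> = (\<Sum>j<p. \<Sum>l<p. \<Sum>i<n. v j * (b i j * b i l) * v l)" by (intro sum.cong refl sum.swap)
  also have "\<dots> = (\<Sum>j<p. v j * (\<Sum>l<p. gram n b j l * v l))"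
    unfolding gram_def by (simp add: sum_distrib_left sum_distrib_right ac_simps)
  also have "\<dots> = (\<Sum>j<p. v j * (\<Sum>k\<in>I. \<beta> k * \<alpha> k * u k j))"
    using Gv by (intro sum.cong refl) auto
  also have "\<dots> = (\<Sum>k\<in>I. \<beta> k * \<alpha> k * (\<Sum>j<p. v j * u k j))"
    by (simp add: sum_distrib_left ac_simps sum.swap[of _ "{..<p}" I])
  also have "\<dots> = (\<Sum>k\<in>I. \<alpha> k * (\<beta> k)\<^sup>2)"
    using vu by (intro sum.cong refl) (auto simp: power2_eq_square)
  finally show "(\<Sum>i<n. (\<Sum>j<p. b i j * v j)\<^sup>2) = (\<Sum>k\<in>I. \<alpha> k * (\<beta> k)\<^sup>2)" .
  have "(\<Sum>j<p. (v j)\<^sup>2) = (\<Sum>j<p. v j * (\<Sum>k\<in>I. \<beta> k * u k j))"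
    by (simp add: power2_eq_square v_def)
  also have "\<dots> = (\<Sum>k\<in>I. \<beta> k * (\<Sum>j<p. v j * u k j))"
    by (simp add: sum_distrib_left ac_simps sum.swap[of _ "{..<p}" I])
  also have "\<dots> = (\<Sum>k\<in>I. (\<beta> k)\<^sup>2)"
    using vu by (intro sum.cong refl) (auto simp: power2_eq_square)
  finally show "(\<Sum>j<p. (v j)\<^sup>2) = (\<Sum>k\<in>I. (\<beta> k)\<^sup>2)" .
qed


lemma sum3_split:
  fixes I J S :: "nat set" and p :: nat
  assumes I: "I \<subseteq> {..<p}" and J: "J \<subseteq> {..<p}" and S: "S \<subseteq> {..<p}"
  shows "(\<Sum>t\<in>I \<union> (\<lambda>k. p + k) ` J \<union> (\<lambda>k. 2*p + k) ` S. G t)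
       = (\<Sum>k\<in>I. G k) + (\<Sum>k\<in>J. G (p + k)) + (\<Sum>k\<in>S. G (2*p + k))"
    and "card (I \<union> (\<lambda>k. p + k) ` J \<union> (\<lambda>k. 2*p + k) ` S) = card I + card J + card S"
proof -
  have fI: "finite I" and fJ: "finite J" and fS: "finite S"
    using I J S finite_subset by blast+
  have d1: "I \<inter> (\<lambda>k. p + k) ` J = {}" using I by auto
  have d2: "(I \<union> (\<lambda>k. p + k) ` J) \<inter> (\<lambda>k. 2*p + k) ` S = {}" using I J by auto
  have i1: "inj_on (\<lambda>k. p + k) J" and i2: "inj_on (\<lambda>k. 2*p + k) S" by (auto simp: inj_on_def)
  show "(\<Sum>t\<in>I \<union> (\<lambda>k. p + k) ` J \<union> (\<lambda>k. 2*p + k) ` S. G t)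
       = (\<Sum>k\<in>I. G k) + (\<Sum>k\<in>J. G (p + k)) + (\<Sum>k\<in>S. G (2*p + k))"
    using fI fJ fS d1 d2 i1 i2 by (simp add: sum.union_disjoint sum.reindex)
  show "card (I \<union> (\<lambda>k. p + k) ` J \<union> (\<lambda>k. 2*p + k) ` S) = card I + card J + card S"
    using fI fJ fS d1 d2 i1 i2 by (simp add: card_Un_disjoint card_image)
qed

lemma L2_tri:
  fixes f g :: "nat \<Rightarrow> real"
  shows "sqrt (\<Sum>i<n. (f i - g i)\<^sup>2) \<le> sqrt (\<Sum>i<n. (f i)\<^sup>2) + sqrt (\<Sum>i<n. (g i)\<^sup>2)"
proof -
  have "L2_set (\<lambda>i. f i + (- g i)) {..<n} \<le> L2_set f {..<n} + L2_set (\<lambda>i. - g i) {..<n}"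
    by (rule L2_set_triangle_ineq)
  thus ?thesis unfolding L2_set_def by simp
qed

lemma count_compare:
  fixes b c d :: "nat \<Rightarrow> nat \<Rightarrow> real"
  assumes ou: "orthn u p" and eu: "eigb (gram n b) u \<alpha> p"
    and ow: "orthn w p" and ew: "eigb (gram n c) w \<gamma> p"
    and oz: "orthn z p" and ez: "eigb (gram n d) z h p"
    and d: "\<And>i j. d i j = b i j - c i j"
    and \<eta>: "\<eta> > 0" and x: "x \<ge> \<epsilon>" and gap: "sqrt (x - \<epsilon>) + \<eta> < sqrt x"
  shows "card {k. k < p \<and> \<alpha> k \<le> x - \<epsilon>} + card {k. k < p \<and> x < \<gamma> k} + card {k. k < p \<and> h k < \<eta>\<^sup>2} \<le> 2 * p"
proof (rule ccontr)
  define I where "I = {k. k < p \<and> \<alpha> k \<le> x - \<epsilon>}"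
  define J where "J = {k. k < p \<and> x < \<gamma> k}"
  define S where "S = {k. k < p \<and> h k < \<eta>\<^sup>2}"
  have I: "I \<subseteq> {..<p}" and J: "J \<subseteq> {..<p}" and S: "S \<subseteq> {..<p}"
    unfolding I_def J_def S_def by auto
  define T where "T = I \<union> (\<lambda>k. p + k) ` J \<union> (\<lambda>k. 2*p + k) ` S"
  assume "\<not> card {k. k < p \<and> \<alpha> k \<le> x - \<epsilon>} + card {k. k < p \<and> x < \<gamma> k} + card {k. k < p \<and> h k < \<eta>\<^sup>2} \<le> 2 * p"
  moreover have cardT: "card T = card I + card J + card S" unfolding T_def by (rule sum3_split(2)[OF I J S])
  ultimately have cT: "card T > 2 * p" unfolding I_def J_def S_def by linarith
  have fT: "finite T" unfolding T_def using I J S finite_subset by blast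
  define F where "F t i = (if t < p then (if i < p then u t i else u t (i - p))
          else if t < 2*p then (if i < p then - w (t - p) i else 0)
          else (if i < p then 0 else - z (t - 2*p) (i - p)))" for t i
  obtain cc where cc0: "\<exists>t\<in>T. cc t \<noteq> 0" and cc: "\<forall>i<2*p. (\<Sum>t\<in>T. cc t * F t i) = 0"
    using lin_dep_exists[OF fT cT, of F] by blast
  define v where "v j = (\<Sum>k\<in>I. cc k * u k j)" for j
  define vw where "vw j = (\<Sum>k\<in>J. cc (p + k) * w k j)" for j
  define vz where "vz j = (\<Sum>k\<in>S. cc (2*p + k) * z k j)" for j
  have ksum: "(\<Sum>t\<in>T. cc t * F t i) = (\<Sum>k\<in>I. cc k * F k i) + (\<Sum>k\<in>J. cc (p+k) * F (p+k) i)
      + (\<Sum>k\<in>S. cc (2*p+k) * F (2*p+k) i)" for i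
    unfolding T_def by (rule sum3_split(1)[OF I J S])
  have vvw: "v j = vw j" if j: "j < p" for j
  proof -
    have "0 = (\<Sum>t\<in>T. cc t * F t j)" using cc j by simp
    also have "\<dots> = v j - vw j"
    proof -
      have e1: "(\<Sum>k\<in>I. cc k * F k j) = v j" unfolding v_def F_def using I j by (intro sum.cong refl) auto
      have e2: "(\<Sum>k\<in>J. cc (p+k) * F (p+k) j) = - vw j"
        unfolding vw_def sum_negf[symmetric] F_def using J j by (intro sum.cong refl) auto
      have e3: "(\<Sum>k\<in>S. cc (2*p+k) * F (2*p+k) j) = 0" unfolding F_def using S j by (intro sum.neutral) auto
      show ?thesis unfolding ksum e1 e2 e3 by simp
    qed
    finally show ?thesis by simp
  qed
  have vvz: "v j = vz j" if j: "j < p" for j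
  proof -
    have "0 = (\<Sum>t\<in>T. cc t * F t (p + j))" using cc j by simp
    also have "\<dots> = v j - vz j"
    proof -
      have e1: "(\<Sum>k\<in>I. cc k * F k (p + j)) = v j" unfolding v_def F_def using I by (intro sum.cong refl) auto
      have e2: "(\<Sum>k\<in>J. cc (p+k) * F (p+k) (p + j)) = 0" unfolding F_def using J by (intro sum.neutral) auto
      have e3: "(\<Sum>k\<in>S. cc (2*p+k) * F (2*p+k) (p + j)) = - vz j"
        unfolding vz_def sum_negf[symmetric] F_def using S by (intro sum.cong refl) auto
      show ?thesis unfolding ksum e1 e2 e3 by simp
    qed
    finally show ?thesis by simp
  qed
  have "\<exists>j<p. v j \<noteq> 0"
  proof (rule ccontr)
    assume "\<not> (\<exists>j<p. v j \<noteq> 0)"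
    hence v0: "\<And>j. j < p \<Longrightarrow> v j = 0" by auto
    have "cc k = 0" if "k \<in> I" for k
      using coord[OF ou I, of k cc] that I v0 unfolding v_def by auto
    moreover have "cc (p + k) = 0" if "k \<in> J" for k
    proof -
      have "(\<Sum>j<p. vw j * w k j) = 0" using v0 vvw by (simp)
      thus ?thesis using coord[OF ow J, of k "\<lambda>k. cc (p + k)"] that J unfolding vw_def by auto
    qed
    moreover have "cc (2*p + k) = 0" if "k \<in> S" for k
    proof -
      have "(\<Sum>j<p. vz j * z k j) = 0" using v0 vvz by (simp)
      thus ?thesis using coord[OF oz S, of k "\<lambda>k. cc (2*p + k)"] that S unfolding vz_def by auto
    qed
    ultimately show False using cc0 unfolding T_def by auto
  qed
  then obtain j0 where j0: "j0 < p" "v j0 \<noteq> 0" by auto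
  define N where "N = (\<Sum>j<p. (v j)\<^sup>2)"
  have N: "N > 0" unfolding N_def by (rule sum_pos2[of _ j0]) (use j0 in auto)
  have NI: "N = (\<Sum>k\<in>I. (cc k)\<^sup>2)" unfolding N_def v_def by (rule quad_form(2)[OF ou eu I])
  have NJ: "N = (\<Sum>k\<in>J. (cc (p+k))\<^sup>2)"
  proof -
    have "N = (\<Sum>j<p. (vw j)\<^sup>2)" unfolding N_def using vvw by simp
    thus ?thesis unfolding vw_def using quad_form(2)[OF ow ew J, of "\<lambda>k. cc (p+k)"] by simp
  qed
  have NS: "N = (\<Sum>k\<in>S. (cc (2*p+k))\<^sup>2)"
  proof -
    have "N = (\<Sum>j<p. (vz j)\<^sup>2)" unfolding N_def using vvz by simp
    thus ?thesis unfolding vz_def using quad_form(2)[OF oz ez S, of "\<lambda>k. cc (2*p+k)"] by simp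
  qed
  define QB where "QB = (\<Sum>i<n. (\<Sum>j<p. b i j * v j)\<^sup>2)"
  define QC where "QC = (\<Sum>i<n. (\<Sum>j<p. c i j * v j)\<^sup>2)"
  define QD where "QD = (\<Sum>i<n. (\<Sum>j<p. d i j * v j)\<^sup>2)"
  have "QB = (\<Sum>k\<in>I. \<alpha> k * (cc k)\<^sup>2)" unfolding QB_def v_def by (rule quad_form(1)[OF ou eu I])
  also have "\<dots> \<le> (\<Sum>k\<in>I. (x - \<epsilon>) * (cc k)\<^sup>2)"
    by (intro sum_mono mult_right_mono) (auto simp: I_def)
  finally have QB: "QB \<le> (x - \<epsilon>) * N" unfolding NI by (simp add: sum_distrib_left)
  have "QC = (\<Sum>i<n. (\<Sum>j<p. c i j * vw j)\<^sup>2)" unfolding QC_def using vvw by simp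
  also have "\<dots> = (\<Sum>k\<in>J. \<gamma> k * (cc (p+k))\<^sup>2)" unfolding vw_def by (rule quad_form(1)[OF ow ew J])
  also have "\<dots> \<ge> (\<Sum>k\<in>J. x * (cc (p+k))\<^sup>2)"
    by (intro sum_mono mult_right_mono) (auto simp: J_def less_imp_le)
  finally have QC: "QC \<ge> x * N" unfolding NJ by (simp add: sum_distrib_left)
  have "QD = (\<Sum>i<n. (\<Sum>j<p. d i j * vz j)\<^sup>2)" unfolding QD_def using vvz by simp
  also have "\<dots> = (\<Sum>k\<in>S. h k * (cc (2*p+k))\<^sup>2)" unfolding vz_def by (rule quad_form(1)[OF oz ez S])
  also have "\<dots> \<le> (\<Sum>k\<in>S. \<eta>\<^sup>2 * (cc (2*p+k))\<^sup>2)"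
    by (intro sum_mono mult_right_mono) (auto simp: S_def less_imp_le)
  finally have QD: "QD \<le> \<eta>\<^sup>2 * N" unfolding NS by (simp add: sum_distrib_left)
  have tri: "sqrt QC \<le> sqrt QB + sqrt QD"
  proof -
    have "(\<Sum>j<p. c i j * v j) = (\<Sum>j<p. b i j * v j) - (\<Sum>j<p. d i j * v j)" for i
      by (simp add: d algebra_simps sum_subtractf)
    thus ?thesis unfolding QB_def QC_def QD_def using L2_tri by presburger
  qed
  have "sqrt x * sqrt N \<le> sqrt QC" using QC by (metis real_sqrt_le_mono real_sqrt_mult)
  also have "\<dots> \<le> sqrt QB + sqrt QD" by (rule tri)
  also have "\<dots> \<le> sqrt (x - \<epsilon>) * sqrt N + \<eta> * sqrt N"
  proof -
    have "sqrt QB \<le> sqrt (x - \<epsilon>) * sqrt N" using QB by (metis real_sqrt_le_mono real_sqrt_mult)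
    moreover have "sqrt QD \<le> \<eta> * sqrt N" using QD \<eta>
      by (metis real_sqrt_le_mono real_sqrt_mult real_sqrt_abs abs_of_pos power2_eq_square real_sqrt_mult_self)
    ultimately show ?thesis by simp
  qed
  also have "\<dots> = (sqrt (x - \<epsilon>) + \<eta>) * sqrt N" by (simp add: algebra_simps)
  also have "\<dots> < sqrt x * sqrt N" using gap N by (intro mult_strict_right_mono) auto
  finally show False by simp
qed


lemma eig_nonneg:
  assumes ou: "orthn u p" and eu: "eigb (gram n b) u \<alpha> p" and k: "k < p"
  shows "\<alpha> k \<ge> 0"
proof -
  have "(\<Sum>i<n. (\<Sum>j<p. b i j * (\<Sum>k'\<in>{k}. 1 * u k' j))\<^sup>2) = (\<Sum>k'\<in>{k}. \<alpha> k' * 1\<^sup>2)"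
    by (rule quad_form(1)[OF ou eu]) (use k in auto)
  hence "\<alpha> k = (\<Sum>i<n. (\<Sum>j<p. b i j * u k j)\<^sup>2)" by simp
  also have "\<dots> \<ge> 0" by (intro sum_nonneg) auto
  finally show ?thesis .
qed

lemma eig_trace:
  assumes ou: "orthn u p" and cu: "compn u p" and eu: "eigb (gram n b) u \<alpha> p"
  shows "(\<Sum>k<p. \<alpha> k) = (\<Sum>i<n. \<Sum>j<p. (b i j)\<^sup>2)"
proof -
  have ak: "\<alpha> k = (\<Sum>j<p. u k j * (\<Sum>l<p. gram n b j l * u k l))" if k: "k < p" for k
  proof -
    have "(\<Sum>j<p. u k j * (\<Sum>l<p. gram n b j l * u k l)) = (\<Sum>j<p. u k j * (\<alpha> k * u k j))"
      using eu k unfolding eigb_def by (intro sum.cong refl) auto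
    also have "\<dots> = \<alpha> k * (\<Sum>j<p. u k j * u k j)" by (simp add: sum_distrib_left ac_simps)
    also have "\<dots> = \<alpha> k" using ou k unfolding orthn_def by auto
    finally show ?thesis by simp
  qed
  have "(\<Sum>k<p. \<alpha> k) = (\<Sum>k<p. \<Sum>j<p. \<Sum>l<p. gram n b j l * (u k j * u k l))"
    using ak by (simp add: sum_distrib_left ac_simps)
  also have "\<dots> = (\<Sum>j<p. \<Sum>k<p. \<Sum>l<p. gram n b j l * (u k j * u k l))" by (rule sum.swap)
  also have "\<dots> = (\<Sum>j<p. \<Sum>l<p. \<Sum>k<p. gram n b j l * (u k j * u k l))" by (intro sum.cong refl sum.swap)
  also have "\<dots> = (\<Sum>j<p. \<Sum>l<p. gram n b j l * (if j = l then 1 else 0))"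
    using cu unfolding compn_def by (intro sum.cong refl) (auto simp: sum_distrib_left[symmetric])
  also have "\<dots> = (\<Sum>j<p. gram n b j j)" by (intro sum.cong refl) (simp add: sum_delta_r)
  also have "\<dots> = (\<Sum>j<p. \<Sum>i<n. (b i j)\<^sup>2)" by (simp add: gram_def power2_eq_square)
  also have "\<dots> = (\<Sum>i<n. \<Sum>j<p. (b i j)\<^sup>2)" by (rule sum.swap)
  finally show ?thesis .
qed

lemma count_le:
  fixes \<alpha> :: "nat \<Rightarrow> real"
  assumes nn: "\<And>k. k < p \<Longrightarrow> \<alpha> k \<ge> 0" and t: "t > 0"
  shows "real (card {k. k < p \<and> t \<le> \<alpha> k}) * t \<le> (\<Sum>k<p. \<alpha> k)"
proof -
  have "real (card {k. k < p \<and> t \<le> \<alpha> k}) * t = (\<Sum>k\<in>{k. k < p \<and> t \<le> \<alpha> k}. t)" by simp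
  also have "\<dots> \<le> (\<Sum>k\<in>{k. k < p \<and> t \<le> \<alpha> k}. \<alpha> k)" by (intro sum_mono) auto
  also have "\<dots> \<le> (\<Sum>k<p. \<alpha> k)" by (intro sum_mono2) (auto simp: nn)
  finally show ?thesis .
qed

lemma card_compl: "card {k. k < p \<and> P k} + card {k. k < p \<and> \<not> P k} = p"
proof -
  have "card ({k. k < p \<and> P k} \<union> {k. k < p \<and> \<not> P k}) = card {k. k < p \<and> P k} + card {k. k < p \<and> \<not> P k}"
    by (rule card_Un_disjoint) auto
  moreover have "{k. k < p \<and> P k} \<union> {k. k < p \<and> \<not> P k} = {..<p}" by auto
  ultimately show ?thesis by simp
qed

lemma gram_sym: "gram n b j l = gram n b l j" unfolding gram_def by (simp add: mult.commute)

lemma one_side: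
  fixes b c :: "nat \<Rightarrow> nat \<Rightarrow> real"
  assumes ou: "orthn u p" and cu: "compn u p" and eu: "eigb (gram n b) u \<alpha> p"
    and ow: "orthn w p" and cw: "compn w p" and ew: "eigb (gram n c) w \<gamma> p"
    and p: "p > 0" and K: "K > 0" and \<epsilon>: "\<epsilon> > 0"
    and nc: "(\<Sum>i<n. \<Sum>j<p. (c i j)\<^sup>2) \<le> K * p"
    and nd: "(\<Sum>i<n. \<Sum>j<p. (b i j - c i j)\<^sup>2) \<le> \<epsilon>^4 * p / (16 * K)"
  shows "real (card {k. k < p \<and> \<alpha> k \<le> x - \<epsilon>}) \<le> real (card {k. k < p \<and> \<gamma> k \<le> x}) + \<epsilon> * p"
proof -
  define d where "d i j = b i j - c i j" for i j
  obtain z h where oz: "orthn z p" and cz: "compn z p" and ez: "eigb (gram n d) z h p"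
    using spectral_fun[of p "gram n d"] gram_sym by blast
  have \<alpha>nn: "\<And>k. k < p \<Longrightarrow> \<alpha> k \<ge> 0" using eig_nonneg[OF ou eu] .
  have \<gamma>nn: "\<And>k. k < p \<Longrightarrow> \<gamma> k \<ge> 0" using eig_nonneg[OF ow ew] .
  have hnn: "\<And>k. k < p \<Longrightarrow> h k \<ge> 0" using eig_nonneg[OF oz ez] .
  have trc: "(\<Sum>k<p. \<gamma> k) \<le> K * p" using eig_trace[OF ow cw ew] nc by simp
  have trd: "(\<Sum>k<p. h k) \<le> \<epsilon>^4 * p / (16 * K)" using eig_trace[OF oz cz ez] nd unfolding d_def by simp
  have cc: "real (card {k. k < p \<and> \<gamma> k \<le> x}) + real (card {k. k < p \<and> \<not> \<gamma> k \<le> x}) = p"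
  proof -
    have "real (card {k. k < p \<and> \<gamma> k \<le> x} + card {k. k < p \<and> \<not> \<gamma> k \<le> x}) = real p"
      using card_compl[of p "\<lambda>k. \<gamma> k \<le> x"] by simp
    thus ?thesis by simp
  qed
  have cp: "card {k. k < p \<and> \<alpha> k \<le> x - \<epsilon>} \<le> p"
    by (rule order_trans[OF card_mono[of "{..<p}"]]) auto
  define X where "X = K / \<epsilon>"
  have X: "X > 0" unfolding X_def using K \<epsilon> by simp
  consider (lo) "x < \<epsilon>" | (hi) "x > X" | (mid) "\<epsilon> \<le> x" "x \<le> X" by linarith
  thus ?thesis
  proof cases
    case lo
    have "{k. k < p \<and> \<alpha> k \<le> x - \<epsilon>} = {}" using \<alpha>nn lo by force
    hence "real (card {k. k < p \<and> \<alpha> k \<le> x - \<epsilon>}) = 0" by simp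
    moreover have "0 \<le> real (card {k. k < p \<and> \<gamma> k \<le> x}) + \<epsilon> * p" using \<epsilon> by simp
    ultimately show ?thesis by linarith
  next
    case hi
    have "real (card {k. k < p \<and> x \<le> \<gamma> k}) * x \<le> K * p"
      using count_le[of p \<gamma> x, OF \<gamma>nn] hi X trc by linarith
    hence "real (card {k. k < p \<and> x \<le> \<gamma> k}) \<le> K * p / x" using hi X by (simp add: field_simps)
    also have "K * p / x \<le> K * p / X" using hi X K p by (intro divide_left_mono) auto
    also have "\<dots> = \<epsilon> * p" unfolding X_def using K \<epsilon> by (simp add: field_simps)
    finally have c1: "real (card {k. k < p \<and> x \<le> \<gamma> k}) \<le> \<epsilon> * p" .
    have "card {k. k < p \<and> \<not> \<gamma> k \<le> x} \<le> card {k. k < p \<and> x \<le> \<gamma> k}"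
      by (intro card_mono) auto
    hence "real (card {k. k < p \<and> \<not> \<gamma> k \<le> x}) \<le> \<epsilon> * p" using c1 by linarith
    thus ?thesis using cc cp by linarith
  next
    case mid
    define \<eta> where "\<eta> = \<epsilon> / (4 * sqrt X)"
    have \<eta>: "\<eta> > 0" unfolding \<eta>_def using \<epsilon> X by simp
    have gap: "sqrt (x - \<epsilon>) + \<eta> < sqrt x"
    proof -
      define s1 where "s1 = sqrt x"
      define s2 where "s2 = sqrt (x - \<epsilon>)"
      have s1: "s1 > 0" unfolding s1_def using mid \<epsilon> by simp
      have s2: "s2 \<ge> 0" unfolding s2_def using mid by simp
      have sq: "s1 * s1 - s2 * s2 = \<epsilon>" unfolding s1_def s2_def using mid \<epsilon> by simp
      have sx: "s1 \<le> sqrt X" unfolding s1_def using mid by simp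
      have s21: "s2 \<le> s1" unfolding s1_def s2_def using \<epsilon> by simp
      have "(s1 - s2) * (s1 + s2) = \<epsilon>" using sq by (simp add: algebra_simps)
      moreover have "s1 + s2 \<le> 2 * sqrt X" using sx s21 by linarith
      moreover have "s1 + s2 > 0" using s1 s2 by linarith
      ultimately have "s1 - s2 \<ge> \<epsilon> / (2 * sqrt X)"
      proof -
        assume e: "(s1 - s2) * (s1 + s2) = \<epsilon>" and l: "s1 + s2 \<le> 2 * sqrt X" and p: "s1 + s2 > 0"
        have "s1 - s2 = \<epsilon> / (s1 + s2)" using e p by (simp add: eq_divide_eq)
        moreover have "\<epsilon> / (2 * sqrt X) \<le> \<epsilon> / (s1 + s2)"
          by (rule divide_left_mono) (use l p \<epsilon> X in auto)
        ultimately show ?thesis by simp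
      qed
      moreover have "\<epsilon> / (2 * sqrt X) > \<eta>" unfolding \<eta>_def using \<epsilon> X by (simp add: field_simps)
      ultimately show ?thesis unfolding s1_def s2_def by linarith
    qed
    have main: "card {k. k < p \<and> \<alpha> k \<le> x - \<epsilon>} + card {k. k < p \<and> x < \<gamma> k} + card {k. k < p \<and> h k < \<eta>\<^sup>2} \<le> 2 * p"
      by (rule count_compare[OF ou eu ow ew oz ez _ \<eta> mid(1) gap]) (simp add: d_def)
    have \<eta>2: "\<eta>\<^sup>2 = \<epsilon>^3 / (16 * K)" unfolding \<eta>_def X_def using \<epsilon> K
      by (simp add: power2_eq_square field_simps real_sqrt_mult_self) (simp add: power3_eq_cube)
    have c0: "real (card {k. k < p \<and> \<eta>\<^sup>2 \<le> h k}) * \<eta>\<^sup>2 \<le> \<epsilon>^4 * p / (16 * K)"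
      using count_le[of p h "\<eta>\<^sup>2", OF hnn] \<eta> trd by simp
    have pos: "0 < \<eta>\<^sup>2" using \<eta> by simp
    have "real (card {k. k < p \<and> \<eta>\<^sup>2 \<le> h k}) \<le> \<epsilon>^4 * p / (16 * K) / \<eta>\<^sup>2"
      by (simp only: pos_le_divide_eq[OF pos] c0)
    also have "\<dots> = \<epsilon> * p" unfolding \<eta>2 using \<epsilon> K by (simp add: field_simps power_numeral_reduce)
    finally have ch: "real (card {k. k < p \<and> \<eta>\<^sup>2 \<le> h k}) \<le> \<epsilon> * p" .
    have c2: "card {k. k < p \<and> h k < \<eta>\<^sup>2} + card {k. k < p \<and> \<not> h k < \<eta>\<^sup>2} = p" by (rule card_compl)
    have c3: "card {k. k < p \<and> x < \<gamma> k} = card {k. k < p \<and> \<not> \<gamma> k \<le> x}"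
      by (rule arg_cong[where f = card]) auto
    have c4: "card {k. k < p \<and> \<not> h k < \<eta>\<^sup>2} = card {k. k < p \<and> \<eta>\<^sup>2 \<le> h k}"
      by (rule arg_cong[where f = card]) auto
    have "real (card {k. k < p \<and> \<alpha> k \<le> x - \<epsilon>}) + real (card {k. k < p \<and> \<not> \<gamma> k \<le> x})
       + real (card {k. k < p \<and> h k < \<eta>\<^sup>2}) \<le> 2 * real p"
    proof -
      have m2: "card {k. k < p \<and> \<alpha> k \<le> x - \<epsilon>} + card {k. k < p \<and> \<not> \<gamma> k \<le> x}
         + card {k. k < p \<and> h k < \<eta>\<^sup>2} \<le> 2 * p" using main c3 by simp
      have "real (card {k. k < p \<and> \<alpha> k \<le> x - \<epsilon>} + card {k. k < p \<and> \<not> \<gamma> k \<le> x}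
         + card {k. k < p \<and> h k < \<eta>\<^sup>2}) \<le> real (2 * p)" using m2 by (simp only: of_nat_le_iff)
      thus ?thesis by simp
    qed
    moreover have "real (card {k. k < p \<and> h k < \<eta>\<^sup>2}) + real (card {k. k < p \<and> \<eta>\<^sup>2 \<le> h k}) = p"
    proof -
      have "real (card {k. k < p \<and> h k < \<eta>\<^sup>2} + card {k. k < p \<and> \<eta>\<^sup>2 \<le> h k}) = real p"
        using c2 c4 by simp
      thus ?thesis by simp
    qed
    ultimately show ?thesis using cc ch by linarith
  qed
qed


lemma levy_le:
  assumes \<epsilon>: "\<epsilon> > 0" and h1: "\<And>x. F (x - \<epsilon>) - \<epsilon> \<le> G x" and h2: "\<And>x. G (x - \<epsilon>) - \<epsilon> \<le> F x"
  shows "0 \<le> levy_dist F G \<and> levy_dist F G \<le> \<epsilon>"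
proof -
  define S where "S = {\<epsilon>. \<epsilon> > 0 \<and> (\<forall>x. F (x - \<epsilon>) - \<epsilon> \<le> G x \<and> G x \<le> F (x + \<epsilon>) + \<epsilon>)}"
  have "G x \<le> F (x + \<epsilon>) + \<epsilon>" for x using h2[of "x + \<epsilon>"] by simp
  hence eS: "\<epsilon> \<in> S" unfolding S_def using \<epsilon> h1 by auto
  have bdd: "bdd_below S" unfolding S_def by (rule bdd_belowI[of _ 0]) auto
  have "Inf S \<le> \<epsilon>" by (rule cInf_lower[OF eS bdd])
  moreover have "0 \<le> Inf S" by (rule cInf_greatest) (use eS in \<open>auto simp: S_def\<close>)
  ultimately show ?thesis unfolding levy_dist_def S_def by simp
qed

lemma esd_gram:
  assumes ou: "orthn u p" and cu: "compn u p" and eu: "eigb (gram n b) u \<alpha> p"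
  shows "esd (mat p p (\<lambda>(j,l). gram n b j l)) x = real (card {k. k < p \<and> \<alpha> k \<le> x}) / real p"
proof -
  let ?M = "mat p p (\<lambda>(j,l). gram n b j l)"
  have M: "?M \<in> carrier_mat p p" by auto
  have "eigb (\<lambda>i j. ?M $$ (i,j)) u \<alpha> p"
    using eu unfolding eigb_def by auto
  hence "char_poly ?M = (\<Prod>k<p. [:- \<alpha> k, 1:])" by (rule char_poly_spec[OF M ou cu])
  thus ?thesis by (rule esd_prod) simp
qed

lemma det_levy:
  fixes b c :: "nat \<Rightarrow> nat \<Rightarrow> real"
  assumes p: "p > 0" and K: "K > 0" and \<epsilon>: "\<epsilon> > 0"
    and nb: "(\<Sum>i<n. \<Sum>j<p. (b i j)\<^sup>2) \<le> K * p"
    and nc: "(\<Sum>i<n. \<Sum>j<p. (c i j)\<^sup>2) \<le> K * p"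
    and nd: "(\<Sum>i<n. \<Sum>j<p. (b i j - c i j)\<^sup>2) \<le> \<epsilon>^4 * p / (16 * K)"
  shows "0 \<le> levy_dist (esd (mat p p (\<lambda>(j,l). gram n b j l))) (esd (mat p p (\<lambda>(j,l). gram n c j l)))
       \<and> levy_dist (esd (mat p p (\<lambda>(j,l). gram n b j l))) (esd (mat p p (\<lambda>(j,l). gram n c j l))) \<le> \<epsilon>"
proof -
  obtain u \<alpha> where ou: "orthn u p" and cu: "compn u p" and eu: "eigb (gram n b) u \<alpha> p"
    using spectral_fun[of p "gram n b"] gram_sym by blast
  obtain w \<gamma> where ow: "orthn w p" and cw: "compn w p" and ew: "eigb (gram n c) w \<gamma> p"
    using spectral_fun[of p "gram n c"] gram_sym by blast
  have nd': "(\<Sum>i<n. \<Sum>j<p. (c i j - b i j)\<^sup>2) \<le> \<epsilon>^4 * p / (16 * K)"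
    using nd by (simp add: power2_commute)
  have pp: "real p > 0" using p by simp
  have s1: "esd (mat p p (\<lambda>(j,l). gram n b j l)) (x - \<epsilon>) - \<epsilon> \<le> esd (mat p p (\<lambda>(j,l). gram n c j l)) x" for x
  proof -
    have "real (card {k. k < p \<and> \<alpha> k \<le> x - \<epsilon>}) \<le> real (card {k. k < p \<and> \<gamma> k \<le> x}) + \<epsilon> * p"
      by (rule one_side[OF ou cu eu ow cw ew p K \<epsilon> nc nd])
    hence "real (card {k. k < p \<and> \<alpha> k \<le> x - \<epsilon>}) / p \<le> real (card {k. k < p \<and> \<gamma> k \<le> x}) / p + \<epsilon>"
      using pp by (simp add: field_simps)
    thus ?thesis unfolding esd_gram[OF ou cu eu] esd_gram[OF ow cw ew] by simp
  qed
  have s2: "esd (mat p p (\<lambda>(j,l). gram n c j l)) (x - \<epsilon>) - \<epsilon> \<le> esd (mat p p (\<lambda>(j,l). gram n b j l)) x" for x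
  proof -
    have "real (card {k. k < p \<and> \<gamma> k \<le> x - \<epsilon>}) \<le> real (card {k. k < p \<and> \<alpha> k \<le> x}) + \<epsilon> * p"
      by (rule one_side[OF ow cw ew ou cu eu p K \<epsilon> nb nd'])
    hence "real (card {k. k < p \<and> \<gamma> k \<le> x - \<epsilon>}) / p \<le> real (card {k. k < p \<and> \<alpha> k \<le> x}) / p + \<epsilon>"
      using pp by (simp add: field_simps)
    thus ?thesis unfolding esd_gram[OF ou cu eu] esd_gram[OF ow cw ew] by simp
  qed
  show ?thesis
    by (rule levy_le[of \<epsilon> "esd (mat p p (\<lambda>(j,l). gram n b j l))" "esd (mat p p (\<lambda>(j,l). gram n c j l))", OF \<epsilon> s1 s2])
qed


lemma grid_point:
  fixes G :: "real \<Rightarrow> real"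
  assumes cont: "continuous_on UNIV G" and mono: "\<And>s t. s \<le> t \<Longrightarrow> G s \<le> G t"
    and t0: "G t0 < lv" and t1: "lv \<le> G t1"
  shows "\<exists>t. G t = lv \<and> (\<forall>s<t. G s < lv)"
proof -
  define S where "S = {t. lv \<le> G t}"
  have ne: "S \<noteq> {}" using t1 unfolding S_def by auto
  have lb: "t0 \<le> t" if "t \<in> S" for t
  proof (rule ccontr)
    assume "\<not> t0 \<le> t"
    hence "G t \<le> G t0" using mono by simp
    thus False using that t0 unfolding S_def by simp
  qed
  have bdd: "bdd_below S" unfolding bdd_below_def using lb by blast
  have cl: "closed S" unfolding S_def
    by (rule closed_Collect_le) (auto intro: continuous_intros cont)
  define \<tau> where "\<tau> = Inf S"
  have \<tau>S: "\<tau> \<in> S" unfolding \<tau>_def by (rule closed_contains_Inf[OF ne bdd cl])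
  have below: "G s < lv" if "s < \<tau>" for s
  proof (rule ccontr)
    assume "\<not> G s < lv"
    hence "s \<in> S" unfolding S_def by simp
    hence "\<tau> \<le> s" unfolding \<tau>_def by (rule cInf_lower[OF _ bdd])
    thus False using that by simp
  qed
  have cl2: "closed {t. G t \<le> lv}"
    by (rule closed_Collect_le) (auto intro: continuous_intros cont)
  have "{..<\<tau>} \<subseteq> {t. G t \<le> lv}" using below by (auto intro: less_imp_le)
  hence "closure {..<\<tau>} \<subseteq> {t. G t \<le> lv}" by (rule closure_minimal[OF _ cl2])
  hence "G \<tau> \<le> lv" unfolding closure_lessThan by auto
  moreover have "lv \<le> G \<tau>" using \<tau>S unfolding S_def by simp
  ultimately show ?thesis using below by (intro exI[of _ \<tau>]) auto
qed

lemma glivenko_grid: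
  fixes G H :: "real \<Rightarrow> real" and m :: nat and tg :: "nat \<Rightarrow> real"
  assumes m: "m \<ge> 1"
    and monoG: "\<And>s t. s \<le> t \<Longrightarrow> G s \<le> G t" and monoH: "\<And>s t. s \<le> t \<Longrightarrow> H s \<le> H t"
    and G01: "\<And>t. 0 \<le> G t \<and> G t \<le> 1" and H01: "\<And>t. 0 \<le> H t \<and> H t \<le> 1"
    and grid: "\<And>l. 1 \<le> l \<Longrightarrow> l < m \<Longrightarrow> G (tg l) = l / m \<and> (\<forall>s < tg l. G s < l / m)"
    and close: "\<And>l. 1 \<le> l \<Longrightarrow> l < m \<Longrightarrow> \<bar>H (tg l) - G (tg l)\<bar> \<le> 1 / m"
  shows "\<bar>H t - G t\<bar> \<le> 2 / m"
proof -
  have mpos: "real m > 0" using m by simp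
  define q where "q = \<lfloor>m * G t\<rfloor>"
  have q1: "q \<le> m * G t" and q2: "m * G t < q + 1" unfolding q_def by linarith+
  have q0: "q \<ge> 0" using G01[of t] mpos unfolding q_def by simp
  define l where "l = nat q"
  have lq: "real l = of_int q" unfolding l_def using q0 by simp
  have lo: "H t \<ge> G t - 2 / m"
  proof -
    define l1 where "l1 = min l (m - 1)"
    have l1m: "l1 < m" unfolding l1_def using m by simp
    have l1G: "l1 / m \<le> G t"
    proof -
      have "real l1 \<le> real l" unfolding l1_def by simp
      also have "\<dots> \<le> m * G t" using q1 lq by simp
      finally show ?thesis using mpos by (simp add: field_simps)
    qed
    have l1G2: "G t - l1 / m \<le> 1 / m"
    proof (cases "l \<le> m - 1")
      case True
      hence "l1 = l" unfolding l1_def by simp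
      hence "G t * m < real l1 + 1" using q2 lq by (simp add: mult.commute)
      hence "G t < (real l1 + 1) / m" using mpos by (simp add: pos_less_divide_eq)
      thus ?thesis by (simp add: add_divide_distrib)
    next
      case False
      hence "l1 = m - 1" unfolding l1_def by simp
      hence e: "real l1 = real m - 1" using m by simp
      have "real l1 / m + 1 / m = 1" using mpos e by (simp add: add_divide_distrib[symmetric])
      thus ?thesis using G01[of t] by linarith
    qed
    show ?thesis
    proof (cases "l1 \<ge> 1")
      case True
      have g: "G (tg l1) = l1 / m" and gb: "\<forall>s < tg l1. G s < l1 / m" using grid[OF True l1m] by auto
      have "tg l1 \<le> t" using gb l1G by (meson not_le)
      hence "H (tg l1) \<le> H t" by (rule monoH)
      moreover have "H (tg l1) \<ge> G (tg l1) - 1 / m" using close[OF True l1m] by simp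
      ultimately show ?thesis using g l1G2 by (simp add: field_simps)
    next
      case False
      hence "l1 = 0" by simp
      hence "G t \<le> 1 / m" using l1G2 by simp
      moreover have "0 < 1 / real m" using mpos by simp
      moreover have "2 / real m = 2 * (1 / m)" by simp
      ultimately show ?thesis using H01[of t] by linarith
    qed
  qed
  have hi: "H t \<le> G t + 2 / m"
  proof (cases "l + 1 < m")
    case True
    have ge1: "1 \<le> l + 1" by simp
    have g: "G (tg (l+1)) = (l+1) / m" using grid[OF ge1 True] by simp
    have Gt: "G t < (l + 1) / m" using q2 lq mpos by (simp add: field_simps)
    have "t < tg (l+1)"
    proof (rule ccontr)
      assume "\<not> t < tg (l+1)"
      hence "G (tg (l+1)) \<le> G t" using monoG by simp
      thus False using g Gt by simp
    qed
    hence "H t \<le> H (tg (l+1))" using monoH by simp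
    also have "\<dots> \<le> G (tg (l+1)) + 1 / m" using close[OF ge1 True] by simp
    also have "\<dots> = (l + 1) / m + 1 / m" using g by simp
    also have "\<dots> \<le> G t + 2 / m" using q1 lq mpos by (simp add: field_simps)
    finally show ?thesis .
  next
    case False
    hence "real l \<ge> real m - 1" by simp
    hence "G t \<ge> (real m - 1) / m" using q1 lq mpos by (simp add: field_simps)
    hence "G t + 1 / m \<ge> 1" using mpos by (simp add: field_simps)
    moreover have "0 < 1 / real m" using mpos by simp
    moreover have "2 / real m = 2 * (1 / m)" by simp
    ultimately show ?thesis using H01[of t] by linarith
  qed
  show ?thesis using lo hi by simp
qed


lemma summable_n_exp:
  fixes c :: real assumes c: "c > 0"
  shows "summable (\<lambda>n. real n * exp (- c * real n))"
proof -
  have b: "real n * exp (- c * real n) \<le> (2 / c) * exp (- c / 2) ^ n" for n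
  proof -
    have "c * real n / 2 \<le> exp (c * real n / 2)"
      using exp_ge_add_one_self[of "c * real n / 2"] by linarith
    hence "real n \<le> (2 / c) * exp (c * real n / 2)" using c by (simp add: field_simps)
    hence "real n * exp (- c * real n) \<le> (2 / c) * exp (c * real n / 2) * exp (- c * real n)"
      by (intro mult_right_mono) auto
    also have "\<dots> = (2 / c) * exp (- c / 2) ^ n"
      by (simp add: exp_add[symmetric] exp_of_nat_mult[symmetric] field_simps)
    finally show ?thesis .
  qed
  have "summable (\<lambda>n. (2 / c) * exp (- c / 2) ^ n)"
    using c by (intro summable_mult summable_geometric) simp
  thus ?thesis
    by (rule summable_comparison_test'[where N = 0]) (use b in simp)
qed

lemma sum_indicator_card: fixes n :: nat shows
  "(\<Sum>k<n. indicator {\<omega>. P k \<omega>} \<omega> :: real) = real (card {k. k < n \<and> P k \<omega>})"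
proof (induction n)
  case 0 thus ?case by simp
next
  case (Suc n)
  have "{k. k < Suc n \<and> P k \<omega>} = {k. k < n \<and> P k \<omega>} \<union> (if P n \<omega> then {n} else {})"
    by (auto simp: less_Suc_eq)
  hence "card {k. k < Suc n \<and> P k \<omega>} = card {k. k < n \<and> P k \<omega>} + (if P n \<omega> then 1 else 0)"
    by (auto simp: card_insert_if)
  thus ?case using Suc by (simp add: indicator_def)
qed

locale sp_setting = prob_space M for M :: "'a measure" +
  fixes p :: "nat \<Rightarrow> nat" and X :: "nat \<Rightarrow> nat \<Rightarrow> nat \<Rightarrow> 'a \<Rightarrow> real"
    and F :: "nat \<Rightarrow> nat \<Rightarrow> real \<Rightarrow> real"
  assumes indep: "\<And>n. indep_vars (\<lambda>_. PiM {..<p n} (\<lambda>_. borel))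
                   (\<lambda>i \<omega>. \<lambda>j\<in>{..<p n}. X n i j \<omega>) {..<n}"
    and marg: "\<And>n i j t. i < n \<Longrightarrow> j < p n \<Longrightarrow>
                 measure M {\<omega> \<in> space M. X n i j \<omega> \<le> t} = F n j t"
    and cont: "\<And>n j. j < p n \<Longrightarrow> continuous_on UNIV (F n j)"
begin

lemma Xmeas: assumes "i < n" "j < p n" shows "X n i j \<in> borel_measurable M"
proof -
  have V: "(\<lambda>\<omega>. \<lambda>j\<in>{..<p n}. X n i j \<omega>) \<in> M \<rightarrow>\<^sub>M PiM {..<p n} (\<lambda>_. borel)"
    using indep[of n] assms unfolding indep_vars_def2 by auto
  have "(\<lambda>\<omega>. (\<lambda>j\<in>{..<p n}. X n i j \<omega>) j) \<in> borel_measurable M"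
    by (rule measurable_compose[OF V measurable_component_singleton]) (use assms in auto)
  thus ?thesis using assms by simp
qed

lemma Fmono: assumes "0 < n" "j < p n" "s \<le> t" shows "F n j s \<le> F n j t"
proof -
  have m: "X n 0 j \<in> borel_measurable M" using Xmeas assms by auto
  have "measure M {\<omega> \<in> space M. X n 0 j \<omega> \<le> s} \<le> measure M {\<omega> \<in> space M. X n 0 j \<omega> \<le> t}"
    by (rule finite_measure_mono) (use assms m in auto)
  thus ?thesis using marg assms by simp
qed

lemma F01: assumes "0 < n" "j < p n" shows "0 \<le> F n j t \<and> F n j t \<le> 1"
proof -
  have "F n j t = prob {\<omega> \<in> space M. X n 0 j \<omega> \<le> t}" using marg[of 0 n j t] assms by simp
  thus ?thesis using measure_nonneg prob_le_1 by metis
qed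

lemma Flow: assumes "0 < n" "j < p n" "e > 0" shows "\<exists>t. F n j t < e"
proof -
  have m[measurable]: "X n 0 j \<in> borel_measurable M" using Xmeas assms by auto
  define A where "A k = {\<omega> \<in> space M. X n 0 j \<omega> \<le> - real k}" for k :: nat
  have "range A \<subseteq> sets M" unfolding A_def by auto
  moreover have "antimono_on UNIV A" unfolding A_def monotone_on_def by auto
  ultimately have "(\<lambda>k. measure M (A k)) \<longlonglongrightarrow> measure M (\<Inter> (range A))"
    by (rule finite_Lim_measure_decseq)
  moreover have "\<Inter> (range A) = {}"
  proof (rule ccontr)
    assume "\<Inter> (range A) \<noteq> {}"
    then obtain \<omega> where "\<And>k. \<omega> \<in> A k" by auto
    hence "X n 0 j \<omega> \<le> - real k" for k unfolding A_def by auto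
    moreover obtain k :: nat where "real k > - X n 0 j \<omega>" using reals_Archimedean2 by blast
    ultimately show False by (metis add.inverse_inverse neg_le_iff_le not_le)
  qed
  ultimately have "(\<lambda>k. measure M (A k)) \<longlonglongrightarrow> 0" by simp
  then obtain k where "measure M (A k) < e" using assms(3) by (metis LIMSEQ_D diff_zero norm_ge_zero order_le_less_trans real_norm_def abs_of_nonneg measure_nonneg lessI le_refl)
  thus ?thesis using marg[of 0 n j "- real k"] assms unfolding A_def by auto
qed

lemma Fhigh: assumes "0 < n" "j < p n" "e > 0" shows "\<exists>t. F n j t > 1 - e"
proof -
  have m[measurable]: "X n 0 j \<in> borel_measurable M" using Xmeas assms by auto
  define A where "A k = {\<omega> \<in> space M. X n 0 j \<omega> \<le> real k}" for k :: nat
  have "range A \<subseteq> sets M" unfolding A_def by auto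
  moreover have "incseq A" unfolding A_def incseq_def by auto
  ultimately have "(\<lambda>k. measure M (A k)) \<longlonglongrightarrow> measure M (\<Union> (range A))"
    by (rule finite_Lim_measure_incseq)
  moreover have "\<Union> (range A) = space M"
  proof
    show "\<Union> (range A) \<subseteq> space M" unfolding A_def by auto
    show "space M \<subseteq> \<Union> (range A)"
    proof
      fix \<omega> assume "\<omega> \<in> space M"
      moreover obtain k :: nat where "real k > X n 0 j \<omega>" using reals_Archimedean2 by blast
      ultimately show "\<omega> \<in> \<Union> (range A)" unfolding A_def by (auto intro!: exI[of _ k] less_imp_le)
    qed
  qed
  ultimately have "(\<lambda>k. measure M (A k)) \<longlonglongrightarrow> 1" by (simp add: prob_space)
  hence "eventually (\<lambda>k. measure M (A k) > 1 - e) sequentially"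
    using assms(3) by (intro order_tendstoD(1)) auto
  then obtain k where "measure M (A k) > 1 - e" by (auto simp: eventually_sequentially)
  thus ?thesis using marg[of 0 n j "real k"] assms unfolding A_def by auto
qed

lemma grid_exists:
  assumes "0 < n" "j < p n" "1 \<le> l" "l < m"
  shows "\<exists>t. F n j t = real l / real m \<and> (\<forall>s<t. F n j s < real l / real m)"
proof -
  have lm: "0 < real l / real m" "real l / real m < 1" using assms by auto
  obtain t0 where t0: "F n j t0 < real l / real m" using Flow[OF assms(1,2) lm(1)] by auto
  obtain t1 where t1: "F n j t1 > 1 - (1 - real l / real m)" using Fhigh[OF assms(1,2), of "1 - real l / real m"] lm by auto
  show ?thesis
    by (rule grid_point[of "F n j" t0 "real l / real m" t1, OF cont[OF assms(2)] Fmono[OF assms(1,2)] t0]) (use t1 in auto)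
qed

lemma hoeffding_F:
  assumes n: "0 < n" and j: "j < p n" and e: "e \<ge> 0"
  shows "prob {\<omega> \<in> space M. e \<le> \<bar>(\<Sum>k<n. indicator {\<omega>. X n k j \<omega> \<le> t} \<omega>) - real n * F n j t\<bar>}
         \<le> 2 * exp (- 2 * e\<^sup>2 / real n)"
proof -
  define Y where "Y k = (indicator {\<omega>. X n k j \<omega> \<le> t} :: 'a \<Rightarrow> real)" for k
  have Yc: "Y k = (\<lambda>\<omega>. indicator {..t} ((\<lambda>j\<in>{..<p n}. X n k j \<omega>) j))" for k
    using j by (auto simp: Y_def indicator_def)
  have iv: "indep_vars (\<lambda>_. borel) Y {..<n}"
  proof -
    have "indep_vars (\<lambda>_. borel) (\<lambda>k \<omega>. (\<lambda>v. indicator {..t} (v j) :: real) ((\<lambda>j\<in>{..<p n}. X n k j \<omega>))) {..<n}"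
    proof (rule indep_vars_compose2[OF indep])
      fix i assume "i \<in> {..<n}"
      show "(\<lambda>v. indicator {..t} (v j) :: real) \<in> PiM {..<p n} (\<lambda>_. borel) \<rightarrow>\<^sub>M borel"
        by (rule measurable_compose[OF measurable_component_singleton]) (use j in auto)
    qed
    moreover have "(\<lambda>k \<omega>. (\<lambda>v. indicator {..t} (v j) :: real) ((\<lambda>j\<in>{..<p n}. X n k j \<omega>))) = Y"
      using j by (auto simp: Y_def indicator_def fun_eq_iff)
    ultimately show ?thesis by simp
  qed
  have EY: "expectation (Y k) = F n j t" if "k < n" for k
  proof -
    have "expectation (Y k) = measure M ({\<omega>. X n k j \<omega> \<le> t} \<inter> space M)"
      unfolding Y_def by (rule Bochner_Integration.integral_indicator)
    also have "{\<omega>. X n k j \<omega> \<le> t} \<inter> space M = {\<omega> \<in> space M. X n k j \<omega> \<le> t}" by auto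
    finally show ?thesis using marg[OF that j] by simp
  qed
  interpret H: Hoeffding_ineq M "{..<n}" Y "\<lambda>_. 0" "\<lambda>_. 1" "\<Sum>k<n. expectation (Y k)"
    by unfold_locales (auto simp: iv Y_def indicator_def)
  have mu: "(\<Sum>k<n. expectation (Y k)) = real n * F n j t" using EY by simp
  have "prob {\<omega> \<in> space M. e \<le> \<bar>(\<Sum>k<n. Y k \<omega>) - (\<Sum>k<n. expectation (Y k))\<bar>}
        \<le> 2 * exp (- 2 * e\<^sup>2 / (\<Sum>k<n. (1 - 0)\<^sup>2))"
    by (rule H.Hoeffding_ineq_abs_ge[OF e]) (use n in simp)
  thus ?thesis unfolding mu by (simp add: Y_def)
qed

end


context sp_setting
begin

definition Fh :: "nat \<Rightarrow> nat \<Rightarrow> 'a \<Rightarrow> real \<Rightarrow> real" where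
  "Fh n j \<omega> t = real (card {k. k < n \<and> X n k j \<omega> \<le> t}) / real n"

definition tg :: "nat \<Rightarrow> nat \<Rightarrow> nat \<Rightarrow> nat \<Rightarrow> real" where
  "tg m n j l = (SOME t. F n j t = real l / real m \<and> (\<forall>s<t. F n j s < real l / real m))"

definition Bad :: "nat \<Rightarrow> nat \<Rightarrow> nat \<Rightarrow> nat \<Rightarrow> 'a set" where
  "Bad m n j l = {\<omega> \<in> space M. real n / real m \<le>
     \<bar>(\<Sum>k<n. indicator {\<omega>. X n k j \<omega> \<le> tg m n j l} \<omega>) - real n * F n j (tg m n j l)\<bar>}"

definition Aev :: "nat \<Rightarrow> nat \<Rightarrow> 'a set" where
  "Aev m n = (if 0 < n then \<Union>j\<in>{..<p n}. \<Union>l\<in>{1..<m}. Bad m n j l else {})"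

lemma tg_prop:
  assumes "0 < n" "j < p n" "1 \<le> l" "l < m"
  shows "F n j (tg m n j l) = real l / real m \<and> (\<forall>s<tg m n j l. F n j s < real l / real m)"
  unfolding tg_def by (rule someI_ex[OF grid_exists[OF assms]])

lemma Bad_sets: assumes "0 < n" "j < p n" shows "Bad m n j l \<in> sets M"
proof -
  define t where "t = tg m n j l"
  have ind: "(\<lambda>\<omega>. indicator {\<omega>. X n k j \<omega> \<le> t} \<omega> :: real) \<in> borel_measurable M" if "k < n" for k
  proof -
    have "(\<lambda>\<omega>. indicator {..t} (X n k j \<omega>) :: real) \<in> borel_measurable M"
      by (rule measurable_compose[OF Xmeas[OF that assms(2)]]) auto
    moreover have "(\<lambda>\<omega>. indicator {..t} (X n k j \<omega>) :: real) = (\<lambda>\<omega>. indicator {\<omega>. X n k j \<omega> \<le> t} \<omega>)"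
      by (auto simp: indicator_def fun_eq_iff)
    ultimately show ?thesis by simp
  qed
  have g[measurable]: "(\<lambda>\<omega>. \<bar>(\<Sum>k<n. indicator {\<omega>. X n k j \<omega> \<le> t} \<omega>) - real n * F n j t\<bar> :: real) \<in> borel_measurable M"
    using ind by (intro borel_measurable_abs borel_measurable_diff borel_measurable_sum) auto
  have "{\<omega> \<in> space M. real n / real m \<le> \<bar>(\<Sum>k<n. indicator {\<omega>. X n k j \<omega> \<le> t} \<omega>) - real n * F n j t\<bar>} \<in> sets M"
    by measurable
  thus ?thesis unfolding Bad_def t_def .
qed

lemma Aev_sets: "Aev m n \<in> sets M"
  unfolding Aev_def using Bad_sets by auto

lemma Bad_prob: assumes "0 < n" "j < p n" "m \<ge> 1"
  shows "prob (Bad m n j l) \<le> 2 * exp (- (2 / (real m)\<^sup>2) * real n)"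
proof -
  have "prob (Bad m n j l) \<le> 2 * exp (- 2 * (real n / real m)\<^sup>2 / real n)"
    unfolding Bad_def by (rule hoeffding_F[OF assms(1,2)]) simp
  also have "- 2 * (real n / real m)\<^sup>2 / real n = - (2 / (real m)\<^sup>2) * real n"
    using assms by (simp add: power2_eq_square field_simps)
  finally show ?thesis .
qed

lemma Aev_prob: assumes "m \<ge> 1"
  shows "prob (Aev m n) \<le> real (p n) * real m * (2 * exp (- (2 / (real m)\<^sup>2) * real n))"
proof (cases "0 < n")
  case False thus ?thesis unfolding Aev_def by simp
next
  case True
  let ?b = "2 * exp (- (2 / (real m)\<^sup>2) * real n)"
  have "prob (Aev m n) = prob (\<Union>j\<in>{..<p n}. \<Union>l\<in>{1..<m}. Bad m n j l)" unfolding Aev_def using True by simp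
  also have "\<dots> \<le> (\<Sum>j<p n. prob (\<Union>l\<in>{1..<m}. Bad m n j l))"
    by (rule measure_UNION_le) (use Bad_sets True in auto)
  also have "\<dots> \<le> (\<Sum>j<p n. \<Sum>l\<in>{1..<m}. prob (Bad m n j l))"
    by (intro sum_mono measure_UNION_le) (use Bad_sets True in auto)
  also have "\<dots> \<le> (\<Sum>j<p n. \<Sum>l\<in>{1..<m}. ?b)"
    by (intro sum_mono Bad_prob) (use True assms in auto)
  also have "\<dots> = real (p n) * (real (m - 1) * ?b)" by simp
  also have "\<dots> \<le> real (p n) * (real m * ?b)"
    by (intro mult_left_mono mult_right_mono) auto
  finally show ?thesis by (simp add: mult.assoc)
qed

lemma Fh_mono: "s \<le> t \<Longrightarrow> Fh n j \<omega> s \<le> Fh n j \<omega> t"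
  unfolding Fh_def by (intro divide_right_mono) (auto intro!: card_mono)

lemma Fh01: "0 \<le> Fh n j \<omega> t \<and> Fh n j \<omega> t \<le> 1"
proof -
  have "card {k. k < n \<and> X n k j \<omega> \<le> t} \<le> card {..<n}" by (intro card_mono) auto
  thus ?thesis unfolding Fh_def by (cases "n = 0") (auto simp: divide_le_eq_1)
qed

lemma AE_good:
  assumes m: "m \<ge> 1" and B: "\<And>n. 0 < n \<Longrightarrow> real (p n) \<le> Bc * real n"
  shows "AE \<omega> in M. eventually (\<lambda>n. \<forall>j<p n. \<forall>t. \<bar>Fh n j \<omega> t - F n j t\<bar> \<le> 2 / real m) sequentially"
proof -
  have summ: "summable (\<lambda>n. prob (Aev m n))"
  proof (rule summable_comparison_test'[where N = 0])
    show "summable (\<lambda>n. Bc * real m * 2 * (real n * exp (- (2 / (real m)\<^sup>2) * real n)))"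
      using m by (intro summable_mult summable_n_exp) simp
    fix n :: nat
    show "norm (prob (Aev m n)) \<le> Bc * real m * 2 * (real n * exp (- (2 / (real m)\<^sup>2) * real n))"
    proof (cases "n = 0")
      case True thus ?thesis unfolding Aev_def by simp
    next
      case False
    have "norm (prob (Aev m n)) = prob (Aev m n)" by simp
    also have "\<dots> \<le> real (p n) * real m * (2 * exp (- (2 / (real m)\<^sup>2) * real n))" by (rule Aev_prob[OF m])
    also have "\<dots> \<le> (Bc * real n) * real m * (2 * exp (- (2 / (real m)\<^sup>2) * real n))"
      by (intro mult_right_mono B) (use False in auto)
    finally show "norm (prob (Aev m n)) \<le> Bc * real m * 2 * (real n * exp (- (2 / (real m)\<^sup>2) * real n))"
      by (simp add: ac_simps)
    qed
  qed
  have "AE \<omega> in M. eventually (\<lambda>n. \<omega> \<in> space M - Aev m n) sequentially"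
    by (rule borel_cantelli_AE1[OF Aev_sets]) (use summ in \<open>auto simp: emeasure_eq_measure\<close>)
  thus ?thesis
  proof (rule AE_mp, intro AE_I2 impI)
    fix \<omega> assume "eventually (\<lambda>n. \<omega> \<in> space M - Aev m n) sequentially"
    moreover have "eventually (\<lambda>n. 0 < n) sequentially" by (rule eventually_gt_at_top)
    ultimately show "eventually (\<lambda>n. \<forall>j<p n. \<forall>t. \<bar>Fh n j \<omega> t - F n j t\<bar> \<le> 2 / real m) sequentially"
    proof eventually_elim
      case (elim n)
      hence n: "0 < n" and om: "\<omega> \<in> space M" and nA: "\<omega> \<notin> Aev m n" by auto
      show ?case
      proof (intro allI impI)
        fix j t assume j: "j < p n"
        have close: "\<bar>Fh n j \<omega> (tg m n j l) - F n j (tg m n j l)\<bar> \<le> 1 / real m" if l: "1 \<le> l" "l < m" for l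
        proof -
          have "\<omega> \<notin> Bad m n j l" using nA n j l unfolding Aev_def by auto
          hence lt: "\<bar>(\<Sum>k<n. indicator {\<omega>. X n k j \<omega> \<le> tg m n j l} \<omega>) - real n * F n j (tg m n j l)\<bar> < real n / real m"
            using om unfolding Bad_def by auto
          have "(\<Sum>k<n. indicator {\<omega>. X n k j \<omega> \<le> tg m n j l} \<omega>) = real n * Fh n j \<omega> (tg m n j l)"
            unfolding Fh_def using n by (simp add: sum_indicator_card)
          hence "\<bar>real n * (Fh n j \<omega> (tg m n j l) - F n j (tg m n j l))\<bar> < real n / real m"
            using lt by (simp add: algebra_simps)
          hence "real n * \<bar>Fh n j \<omega> (tg m n j l) - F n j (tg m n j l)\<bar> < real n * (1 / real m)"
            by (simp add: abs_mult)
          hence "\<bar>Fh n j \<omega> (tg m n j l) - F n j (tg m n j l)\<bar> < 1 / real m"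
            using n by (metis mult_less_cancel_left_pos of_nat_0_less_iff)
          thus ?thesis by (rule less_imp_le)
        qed
        show "\<bar>Fh n j \<omega> t - F n j t\<bar> \<le> 2 / real m"
          by (rule glivenko_grid[OF m, of "F n j" "Fh n j \<omega>" "tg m n j"])
             (use Fmono[OF n j] Fh_mono F01[OF n j] Fh01 tg_prop[OF n j] close in auto)
      qed
    qed
  qed
qed

end


lemma rank_eq:
  assumes i: "i < n"
  shows "rank_ij n x i j = real (card {k. k < n \<and> x k j \<le> x i j})"
proof -
  have "{k. k < n \<and> x k j \<le> x i j} = insert i {k. k < n \<and> k \<noteq> i \<and> x k j \<le> x i j}" using i by auto
  hence "card {k. k < n \<and> x k j \<le> x i j} = Suc (card {k. k < n \<and> k \<noteq> i \<and> x k j \<le> x i j})"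
    by simp
  thus ?thesis unfolding rank_ij_def by simp
qed

lemma rank_bounds:
  assumes i: "i < n"
  shows "1 \<le> rank_ij n x i j \<and> rank_ij n x i j \<le> real n"
proof -
  have "card {k. k < n \<and> x k j \<le> x i j} \<le> card {..<n}" by (intro card_mono) auto
  moreover have "0 < card {k. k < n \<and> x k j \<le> x i j}"
    using i by (subst card_gt_0_iff) auto
  ultimately show ?thesis unfolding rank_eq[OF i] by simp
qed

lemma spearman_gram:
  assumes n: "n > 0"
  shows "spearman n p x = mat p p (\<lambda>(j,l). gram n (\<lambda>i j. rank_mat n p x $$ (i,j) / sqrt n) j l)"
proof (rule eq_matI)
  fix j l assume j: "j < dim_row (mat p p (\<lambda>(j,l). gram n (\<lambda>i j. rank_mat n p x $$ (i,j) / sqrt n) j l))"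
    and l: "l < dim_col (mat p p (\<lambda>(j,l). gram n (\<lambda>i j. rank_mat n p x $$ (i,j) / sqrt n) j l))"
  hence j: "j < p" and l: "l < p" by auto
  let ?R = "rank_mat n p x"
  have R: "?R \<in> carrier_mat n p" unfolding rank_mat_def by auto
  have "spearman n p x $$ (j,l) = (1 / real n) * (\<Sum>i<n. ?R $$ (i,j) * ?R $$ (i,l))"
    unfolding spearman_def using R j l
    by (simp add: scalar_prod_def lessThan_atLeast0)
  also have "\<dots> = gram n (\<lambda>i j. ?R $$ (i,j) / sqrt n) j l"
    unfolding gram_def using n by (simp add: sum_distrib_left field_simps)
  finally show "spearman n p x $$ (j,l) = mat p p (\<lambda>(j,l). gram n (\<lambda>i j. ?R $$ (i,j) / sqrt n) j l) $$ (j,l)"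
    using j l by simp
qed (auto simp: spearman_def rank_mat_def)

lemma W_gram:
  "W_mat n p G x = mat p p (\<lambda>(j,l). gram n (\<lambda>i j. sqrt (3 / real n) * (2 * G j (x i j) - 1)) j l)"
proof (rule eq_matI)
  fix j l assume "j < dim_row (mat p p (\<lambda>(j,l). gram n (\<lambda>i j. sqrt (3 / real n) * (2 * G j (x i j) - 1)) j l))"
    "l < dim_col (mat p p (\<lambda>(j,l). gram n (\<lambda>i j. sqrt (3 / real n) * (2 * G j (x i j) - 1)) j l))"
  hence j: "j < p" and l: "l < p" by auto
  have s: "sqrt (3 / real n) * sqrt (3 / real n) = 3 / real n" by simp
  have pw: "sqrt (3 / real n) * u * (sqrt (3 / real n) * v) = 3 / real n * (u * v)" for u v :: real
  proof -
    have "sqrt (3 / real n) * u * (sqrt (3 / real n) * v) = (sqrt (3 / real n) * sqrt (3 / real n)) * (u * v)"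
      by (simp only: ac_simps)
    thus ?thesis using s by simp
  qed
  show "W_mat n p G x $$ (j,l) = mat p p (\<lambda>(j,l). gram n (\<lambda>i j. sqrt (3 / real n) * (2 * G j (x i j) - 1)) j l) $$ (j,l)"
    using j l unfolding W_mat_def gram_def pw by (simp add: sum_distrib_left)
qed (auto simp: W_mat_def)

definition sn :: "nat \<Rightarrow> real" where "sn n = sqrt (12 / ((real n)\<^sup>2 - 1))"
definition rho :: "nat \<Rightarrow> real" where "rho n = \<bar>sn n * real n - sqrt 12\<bar> + sn n"

lemma rho_lim: "rho \<longlonglongrightarrow> 0"
proof -
  have a: "(\<lambda>n. sqrt (12 / ((real n)\<^sup>2 - 1)) * real n) \<longlonglongrightarrow> 12 powr (1/2)"
    by real_asymp
  have b: "(\<lambda>n. sqrt (12 / ((real n)\<^sup>2 - 1))) \<longlonglongrightarrow> 0"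
    by real_asymp
  have a': "(\<lambda>n. sn n * real n) \<longlonglongrightarrow> sqrt 12" using a unfolding sn_def by (simp add: powr_half_sqrt)
  have "(\<lambda>n. sn n * real n - sqrt 12) \<longlonglongrightarrow> 0" using tendsto_diff[OF a' tendsto_const[of "sqrt 12"]] by simp
  hence "(\<lambda>n. \<bar>sn n * real n - sqrt 12\<bar>) \<longlonglongrightarrow> 0" by (rule tendsto_rabs_zero)
  from tendsto_add[OF this b[folded sn_def]] show ?thesis unfolding rho_def by simp
qed

lemma sn_bound: assumes "n \<ge> 2" shows "sn n * real n \<le> 4" "sn n \<ge> 0"
proof -
  have r2: "real n \<ge> 2" using assms by simp
  have "real n * real n \<ge> 2 * 2" by (rule mult_mono) (use r2 in auto)
  hence n2: "(real n)\<^sup>2 \<ge> 4" unfolding power2_eq_square by simp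
  define a where "a = (real n)\<^sup>2 - 1"
  have a: "a > 0" unfolding a_def using n2 by linarith
  have q: "12 / a > 0" using a by simp
  show snp: "sn n \<ge> 0" unfolding sn_def a_def[symmetric] using q by simp
  have "sn n * real n = sqrt (12 / a) * sqrt ((real n)\<^sup>2)" unfolding sn_def a_def by simp
  also have "\<dots> = sqrt (12 / a * (real n)\<^sup>2)" by (rule real_sqrt_mult[symmetric])
  also have "\<dots> \<le> sqrt 16"
  proof (rule real_sqrt_le_mono)
    have "12 * (real n)\<^sup>2 \<le> 16 * a" unfolding a_def using n2 by (simp add: algebra_simps)
    hence "12 * (real n)\<^sup>2 / a \<le> 16" using a by (simp add: pos_divide_le_eq)
    thus "12 / a * (real n)\<^sup>2 \<le> 16" by simp
  qed
  also have "sqrt 16 = (4::real)" by (simp add: real_sqrt_eq_iff)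
  finally show "sn n * real n \<le> 4" .
qed


lemma sq_le_of_abs: fixes d c :: real assumes "\<bar>d\<bar> \<le> c" shows "d\<^sup>2 \<le> c\<^sup>2"
proof -
  have "\<bar>d\<bar>\<^sup>2 \<le> c\<^sup>2" by (rule power_mono) (use assms in auto)
  thus ?thesis by simp
qed

lemma abs3: fixes a b c :: real shows "\<bar>a + b - c\<bar> \<le> \<bar>a\<bar> + \<bar>b\<bar> + \<bar>c\<bar>"
  by arith

lemma n2_facts: assumes "n \<ge> 2" shows "real n > 0" "(real n)\<^sup>2 - 1 > 0" "(sn n)\<^sup>2 = 12 / ((real n)\<^sup>2 - 1)"
proof -
  show "real n > 0" using assms by simp
  have r2: "real n \<ge> 2" using assms by simp
  have "real n * real n \<ge> 2 * 2" by (rule mult_mono) (use r2 in auto)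
  thus a: "(real n)\<^sup>2 - 1 > 0" unfolding power2_eq_square by simp
  show "(sn n)\<^sup>2 = 12 / ((real n)\<^sup>2 - 1)" unfolding sn_def using a by simp
qed

lemma entry_b:
  assumes n2: "n \<ge> 2" and r: "1 \<le> r" "r \<le> real n"
  shows "(sn n * (r - (real n + 1) / 2) / sqrt (real n))\<^sup>2 \<le> 3 / real n"
proof -
  note nf = n2_facts[OF n2]
  have D: "(r - (real n + 1) / 2)\<^sup>2 \<le> ((real n - 1) / 2)\<^sup>2"
  proof (rule sq_le_of_abs)
    show "\<bar>r - (real n + 1) / 2\<bar> \<le> (real n - 1) / 2" unfolding abs_le_iff using r by (auto simp: field_simps)
  qed
  have "(sn n * (r - (real n + 1) / 2) / sqrt (real n))\<^sup>2 = (sn n)\<^sup>2 * (r - (real n + 1) / 2)\<^sup>2 / real n"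
    using nf by (simp add: power_divide power_mult_distrib)
  also have "\<dots> \<le> (sn n)\<^sup>2 * ((real n - 1) / 2)\<^sup>2 / real n"
    using D nf by (intro divide_right_mono mult_left_mono) auto
  also have "(sn n)\<^sup>2 * ((real n - 1) / 2)\<^sup>2 \<le> 3"
  proof -
    have "(sn n)\<^sup>2 * ((real n - 1) / 2)\<^sup>2 = 3 * (real n - 1)\<^sup>2 / ((real n)\<^sup>2 - 1)"
    proof -
      have "(real n)\<^sup>2 * 4 - 4 \<noteq> 0" using nf(2) by simp
      thus ?thesis unfolding nf(3) using nf(2) by (simp add: power_divide field_simps)
    qed
    also have "\<dots> \<le> 3"
    proof -
      have "3 * (real n - 1)\<^sup>2 \<le> 3 * ((real n)\<^sup>2 - 1)"
        using n2 by (simp add: power2_eq_square algebra_simps)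
      thus ?thesis using nf(2) by (simp add: pos_divide_le_eq)
    qed
    finally show ?thesis .
  qed
  hence "(sn n)\<^sup>2 * ((real n - 1) / 2)\<^sup>2 / real n \<le> 3 / real n"
    using nf by (intro divide_right_mono) auto
  finally show ?thesis .
qed

lemma entry_c:
  assumes "0 \<le> g" "g \<le> 1"
  shows "(sqrt (3 / real n) * (2 * g - 1))\<^sup>2 \<le> 3 / real n"
proof -
  have "(2 * g - 1)\<^sup>2 \<le> 1\<^sup>2" by (rule sq_le_of_abs) (use assms in auto)
  hence "3 / real n * (2 * g - 1)\<^sup>2 \<le> 3 / real n * 1" by (intro mult_left_mono) auto
  thus ?thesis by (simp add: power_mult_distrib)
qed

lemma entry_d:
  assumes n2: "n \<ge> 2" and g: "0 \<le> g" "g \<le> 1" and e: "\<bar>r / real n - g\<bar> \<le> \<Delta>"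
  shows "(sn n * (r - (real n + 1) / 2) / sqrt (real n) - sqrt (3 / real n) * (2 * g - 1))\<^sup>2
         \<le> (4 * \<Delta> + rho n)\<^sup>2 / real n"
proof -
  note nf = n2_facts[OF n2]
  note sb = sn_bound[OF n2]
  define fh where "fh = r / real n"
  have r: "r = real n * fh" unfolding fh_def using nf by simp
  have s3: "sqrt 12 = 2 * sqrt 3"
  proof -
    have "sqrt (4 * 3) = sqrt 4 * sqrt (3::real)" by (rule real_sqrt_mult)
    moreover have "sqrt 4 = (2::real)" by (simp add: real_sqrt_eq_iff)
    ultimately show ?thesis by simp
  qed
  have sq3: "sqrt (3 / real n) = sqrt 3 / sqrt (real n)" by (simp add: real_sqrt_divide)
  define Z where "Z = sn n * real n * (fh - g) + (sn n * real n - sqrt 12) * (g - 1/2) - sn n / 2"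
  have eq: "sn n * (r - (real n + 1) / 2) / sqrt (real n) - sqrt (3 / real n) * (2 * g - 1) = Z / sqrt (real n)"
    unfolding Z_def r sq3 s3 using nf(1) by (simp add: field_simps)
  have "\<bar>Z\<bar> \<le> sn n * real n * \<bar>fh - g\<bar> + \<bar>sn n * real n - sqrt 12\<bar> * \<bar>g - 1/2\<bar> + sn n / 2"
  proof -
    have "\<bar>Z\<bar> \<le> \<bar>sn n * real n * (fh - g)\<bar> + \<bar>(sn n * real n - sqrt 12) * (g - 1/2)\<bar> + \<bar>sn n / 2\<bar>"
      unfolding Z_def by (rule abs3)
    also have "\<bar>sn n * real n * (fh - g)\<bar> = sn n * real n * \<bar>fh - g\<bar>"
      using sb by (simp add: abs_mult)
    also have "\<bar>(sn n * real n - sqrt 12) * (g - 1/2)\<bar> = \<bar>sn n * real n - sqrt 12\<bar> * \<bar>g - 1/2\<bar>"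
      by (simp add: abs_mult)
    also have "\<bar>sn n / 2\<bar> = sn n / 2" using sb by simp
    finally show ?thesis .
  qed
  also have "\<dots> \<le> 4 * \<Delta> + \<bar>sn n * real n - sqrt 12\<bar> * (1/2) + sn n / 2"
  proof -
    have "sn n * real n * \<bar>fh - g\<bar> \<le> 4 * \<Delta>"
      using e sb unfolding fh_def by (intro mult_mono) auto
    moreover have "\<bar>sn n * real n - sqrt 12\<bar> * \<bar>g - 1/2\<bar> \<le> \<bar>sn n * real n - sqrt 12\<bar> * (1/2)"
    proof -
      have ga: "\<bar>g - 1/2\<bar> \<le> 1/2" using g by arith
      show ?thesis by (intro mult_left_mono ga) simp
    qed
    ultimately show ?thesis by linarith
  qed
  also have "\<dots> \<le> 4 * \<Delta> + rho n"
  proof -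
    have h: "D + a * (1/2) + s / 2 \<le> D + (a + s)" if "0 \<le> a" "0 \<le> s" for D a s :: real
      using that by linarith
    show ?thesis unfolding rho_def by (rule h) (use sb in auto)
  qed
  finally have Z: "\<bar>Z\<bar> \<le> 4 * \<Delta> + rho n" .
  have "(Z / sqrt (real n))\<^sup>2 = Z\<^sup>2 / real n" using nf by (simp add: power_divide)
  also have "\<dots> \<le> (4 * \<Delta> + rho n)\<^sup>2 / real n"
    using nf by (intro divide_right_mono sq_le_of_abs Z) auto
  finally show ?thesis unfolding eq .
qed


lemma sum_const_bound:
  assumes "\<And>i j. i < n \<Longrightarrow> j < p \<Longrightarrow> f i j \<le> K / real n" and "n > 0"
  shows "(\<Sum>i<n. \<Sum>j<p. f i j) \<le> K * real p"
proof -
  have "(\<Sum>i<n. \<Sum>j<p. f i j) \<le> (\<Sum>i<n. \<Sum>j<p. K / real n)"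
    by (intro sum_mono) (use assms in auto)
  also have "\<dots> = K * real p" using assms(2) by simp
  finally show ?thesis .
qed

lemma sums_bound:
  fixes x :: "nat \<Rightarrow> nat \<Rightarrow> real" and G :: "nat \<Rightarrow> real \<Rightarrow> real"
  assumes n2: "n \<ge> 2"
    and G01: "\<And>j t. j < p \<Longrightarrow> 0 \<le> G j t \<and> G j t \<le> 1"
    and cl: "\<And>i j. i < n \<Longrightarrow> j < p \<Longrightarrow> \<bar>real (card {k. k < n \<and> x k j \<le> x i j}) / real n - G j (x i j)\<bar> \<le> \<Delta>"
  defines "b \<equiv> \<lambda>i j. rank_mat n p x $$ (i,j) / sqrt (real n)"
    and "c \<equiv> \<lambda>i j. sqrt (3 / real n) * (2 * G j (x i j) - 1)"
  shows "(\<Sum>i<n. \<Sum>j<p. (b i j)\<^sup>2) \<le> 3 * real p"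
    and "(\<Sum>i<n. \<Sum>j<p. (c i j)\<^sup>2) \<le> 3 * real p"
    and "(\<Sum>i<n. \<Sum>j<p. (b i j - c i j)\<^sup>2) \<le> (4 * \<Delta> + rho n)\<^sup>2 * real p"
proof -
  have npos: "n > 0" using n2 by simp
  have bij: "b i j = sn n * (rank_ij n x i j - (real n + 1) / 2) / sqrt (real n)" if "i < n" "j < p" for i j
    unfolding b_def rank_mat_def sn_def using that by simp
  show "(\<Sum>i<n. \<Sum>j<p. (b i j)\<^sup>2) \<le> 3 * real p"
    by (rule sum_const_bound[OF _ npos]) (use bij entry_b[OF n2] rank_bounds in auto)
  show "(\<Sum>i<n. \<Sum>j<p. (c i j)\<^sup>2) \<le> 3 * real p"
    by (rule sum_const_bound[OF _ npos]) (use entry_c G01 in \<open>auto simp: c_def\<close>)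
  show "(\<Sum>i<n. \<Sum>j<p. (b i j - c i j)\<^sup>2) \<le> (4 * \<Delta> + rho n)\<^sup>2 * real p"
  proof (rule sum_const_bound[OF _ npos])
    fix i j assume i: "i < n" and j: "j < p"
    have "\<bar>rank_ij n x i j / real n - G j (x i j)\<bar> \<le> \<Delta>" using cl[OF i j] rank_eq[OF i] by simp
    thus "(b i j - c i j)\<^sup>2 \<le> (4 * \<Delta> + rho n)\<^sup>2 / real n"
      unfolding bij[OF i j] c_def using entry_d[OF n2] G01[OF j] by blast
  qed
qed


theorem theorem2:
  fixes M :: "'a measure"
    and p :: "nat \<Rightarrow> nat"
    and X :: "nat \<Rightarrow> nat \<Rightarrow> nat \<Rightarrow> 'a \<Rightarrow> real"
    and F :: "nat \<Rightarrow> nat \<Rightarrow> real \<Rightarrow> real"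
    and y :: real
  assumes "prob_space M"
    and indep: "\<And>n. prob_space.indep_vars M (\<lambda>_. PiM {..<p n} (\<lambda>_. borel))
                   (\<lambda>i \<omega>. \<lambda>j\<in>{..<p n}. X n i j \<omega>) {..<n}"
    and ident: "\<And>n i. i < n \<Longrightarrow>
                 distr M (PiM {..<p n} (\<lambda>_. borel)) (\<lambda>\<omega>. \<lambda>j\<in>{..<p n}. X n i j \<omega>) =
                 distr M (PiM {..<p n} (\<lambda>_. borel)) (\<lambda>\<omega>. \<lambda>j\<in>{..<p n}. X n 0 j \<omega>)"
    and marg: "\<And>n i j t. i < n \<Longrightarrow> j < p n \<Longrightarrow>
                 measure M {\<omega> \<in> space M. X n i j \<omega> \<le> t} = F n j t"
    and cont: "\<And>n j. j < p n \<Longrightarrow> continuous_on UNIV (F n j)"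
    and y_pos: "0 < y"
    and ratio: "(\<lambda>n. real (p n) / real n) \<longlonglongrightarrow> y"
  shows "AE \<omega> in M. (\<lambda>n. levy_dist
            (esd (spearman n (p n) (\<lambda>i j. X n i j \<omega>)))
            (esd (W_mat n (p n) (F n) (\<lambda>i j. X n i j \<omega>)))) \<longlonglongrightarrow> 0"
proof -
  have "sp_setting M p X F"
    unfolding sp_setting_def sp_setting_axioms_def using assms(1) indep marg cont by auto
  then interpret S: sp_setting M p X F .
  obtain B where B: "\<And>n. \<bar>real (p n) / real n\<bar> \<le> B"
    using convergent_imp_bounded[OF ratio] unfolding bounded_iff by auto
  have Bn: "real (p n) \<le> B * real n" if "0 < n" for n
  proof -
    have "real (p n) / real n \<le> B" using B[of n] by simp
    thus ?thesis using that by (simp add: divide_le_eq)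
  qed
  have AEall: "AE \<omega> in M. \<forall>m. eventually (\<lambda>n. \<forall>j<p n. \<forall>t. \<bar>S.Fh n j \<omega> t - F n j t\<bar> \<le> 2 / real (Suc m)) sequentially"
    unfolding AE_all_countable using S.AE_good[of "Suc _" B] Bn by auto
  have ppos: "eventually (\<lambda>n. 0 < p n) sequentially"
  proof -
    have "eventually (\<lambda>n. real (p n) / real n > y / 2) sequentially"
      using ratio y_pos by (intro order_tendstoD(1)) auto
    thus ?thesis by eventually_elim (use y_pos in \<open>auto intro: Nat.gr0I\<close>)
  qed
  show ?thesis
    using AEall
  proof (rule eventually_mono)
    fix \<omega> assume good: "\<forall>m. eventually (\<lambda>n. \<forall>j<p n. \<forall>t. \<bar>S.Fh n j \<omega> t - F n j t\<bar> \<le> 2 / real (Suc m)) sequentially"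
    show "(\<lambda>n. levy_dist (esd (spearman n (p n) (\<lambda>i j. X n i j \<omega>)))
            (esd (W_mat n (p n) (F n) (\<lambda>i j. X n i j \<omega>)))) \<longlonglongrightarrow> 0"
    proof (rule tendstoI)
      fix e :: real assume e: "e > 0"
      define \<epsilon> where "\<epsilon> = min (e / 2) 1"
      have \<epsilon>: "\<epsilon> > 0" "\<epsilon> < e" unfolding \<epsilon>_def using e by auto
      have \<epsilon>2: "\<epsilon>\<^sup>2 > 0" using \<epsilon> by simp
      obtain m :: nat where m: "112 / \<epsilon>\<^sup>2 < real m" using reals_Archimedean2 by blast
      have m8: "8 / real (Suc m) \<le> \<epsilon>\<^sup>2 / 14"
      proof -
        have "112 < real m * \<epsilon>\<^sup>2" using m \<epsilon>2 by (simp add: divide_less_eq)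
        moreover have "real (Suc m) * \<epsilon>\<^sup>2 = real m * \<epsilon>\<^sup>2 + \<epsilon>\<^sup>2" by (simp add: algebra_simps)
        ultimately have "112 \<le> real (Suc m) * \<epsilon>\<^sup>2" using \<epsilon>2 by linarith
        thus ?thesis by (simp add: divide_le_eq field_simps)
      qed
      have rho_ev: "eventually (\<lambda>n. rho n < \<epsilon>\<^sup>2 / 14) sequentially"
        using rho_lim \<epsilon>2 by (intro order_tendstoD(2)) auto
      have n2_ev: "eventually (\<lambda>n. 2 \<le> n) sequentially" by (rule eventually_ge_at_top)
      from good[rule_format, of m] rho_ev n2_ev ppos
      show "eventually (\<lambda>n. dist (levy_dist (esd (spearman n (p n) (\<lambda>i j. X n i j \<omega>)))
            (esd (W_mat n (p n) (F n) (\<lambda>i j. X n i j \<omega>)))) 0 < e) sequentially"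
      proof eventually_elim
        case (elim n)
        hence gd: "\<And>j t. j < p n \<Longrightarrow> \<bar>S.Fh n j \<omega> t - F n j t\<bar> \<le> 2 / real (Suc m)"
          and rh: "rho n < \<epsilon>\<^sup>2 / 14" and n2: "2 \<le> n" and pn: "0 < p n" by auto
        have npos: "0 < n" using n2 by simp
        define x where "x = (\<lambda>i j. X n i j \<omega>)"
        define \<Delta> where "\<Delta> = 2 / real (Suc m)"
        have G01: "\<And>j t. j < p n \<Longrightarrow> 0 \<le> F n j t \<and> F n j t \<le> 1" using S.F01[OF npos] by auto
        have cl: "\<bar>real (card {k. k < n \<and> x k j \<le> x i j}) / real n - F n j (x i j)\<bar> \<le> \<Delta>"
          if "i < n" "j < p n" for i j
          using gd[OF that(2), of "x i j"] unfolding S.Fh_def x_def \<Delta>_def by simp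
        define b where "b = (\<lambda>i j. rank_mat n (p n) x $$ (i,j) / sqrt (real n))"
        define c where "c = (\<lambda>i j. sqrt (3 / real n) * (2 * F n j (x i j) - 1))"
        note sb0 = sums_bound[where n=n and p="p n" and G="F n" and x=x and \<Delta>=\<Delta>, OF n2 G01 cl]
        have sb1: "(\<Sum>i<n. \<Sum>j<p n. (b i j)\<^sup>2) \<le> 3 * real (p n)" using sb0(1) unfolding b_def by simp
        have sb2: "(\<Sum>i<n. \<Sum>j<p n. (c i j)\<^sup>2) \<le> 3 * real (p n)" using sb0(2) unfolding c_def by simp
        have sb3: "(\<Sum>i<n. \<Sum>j<p n. (b i j - c i j)\<^sup>2) \<le> (4 * \<Delta> + rho n)\<^sup>2 * real (p n)"
          using sb0(3) unfolding b_def c_def by simp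
        have D: "0 \<le> 4 * \<Delta> + rho n"
        proof -
          have "0 \<le> rho n" unfolding rho_def using sn_bound[OF n2] by simp
          moreover have "0 \<le> \<Delta>" unfolding \<Delta>_def by simp
          ultimately show ?thesis by simp
        qed
        have "4 * \<Delta> + rho n \<le> \<epsilon>\<^sup>2 / 7" using m8 rh unfolding \<Delta>_def by simp
        hence "(4 * \<Delta> + rho n)\<^sup>2 \<le> (\<epsilon>\<^sup>2 / 7)\<^sup>2" using D by (intro power_mono) auto
        also have "\<dots> \<le> \<epsilon>^4 / (16 * 3)"
        proof -
          have "(\<epsilon>\<^sup>2 / 7)\<^sup>2 = \<epsilon>^4 / 49" by (simp add: power_divide flip: power_mult)
          moreover have "\<epsilon>^4 / 49 \<le> \<epsilon>^4 / (16 * 3)"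
            by (rule divide_left_mono) (use \<epsilon> in auto)
          ultimately show ?thesis by linarith
        qed
        finally have "(4 * \<Delta> + rho n)\<^sup>2 * real (p n) \<le> \<epsilon>^4 / (16 * 3) * real (p n)"
          by (intro mult_right_mono) auto
        hence nd: "(\<Sum>i<n. \<Sum>j<p n. (b i j - c i j)\<^sup>2) \<le> \<epsilon>^4 * real (p n) / (16 * 3)"
          using sb3 by linarith
        have L: "0 \<le> levy_dist (esd (mat (p n) (p n) (\<lambda>(j,l). gram n b j l))) (esd (mat (p n) (p n) (\<lambda>(j,l). gram n c j l)))
           \<and> levy_dist (esd (mat (p n) (p n) (\<lambda>(j,l). gram n b j l))) (esd (mat (p n) (p n) (\<lambda>(j,l). gram n c j l))) \<le> \<epsilon>"
          by (rule det_levy[OF pn _ \<epsilon>(1) sb1 sb2 nd]) simp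
        have e1: "spearman n (p n) x = mat (p n) (p n) (\<lambda>(j,l). gram n b j l)"
          unfolding b_def by (rule spearman_gram[OF npos])
        have e2: "W_mat n (p n) (F n) x = mat (p n) (p n) (\<lambda>(j,l). gram n c j l)"
          unfolding c_def by (rule W_gram)
        show ?case using L \<epsilon> unfolding e1[unfolded x_def] e2[unfolded x_def] by simp
      qed
    qed
  qed
qed


end
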